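(* (PBW) Let $F$ be a field, $G$ a group and $\chi: G\times G\to F$ a bicharacter. Let $L$ be a braided m-Lie algebra in ${}^{FG}_{FG}\mathcal{YD}$ whose braiding is determined by $\chi$. Let $E$ be a homogeneous basis of $L$, $B$ a set, $\varphi:E\to B$ a bijection extended linearly to $\varphi:L\to FB$, with $FB$ carrying the Yetter–Drinfeld structure transported from $L$ via $\varphi$, and $FB^*=T(FB)$ (the free algebra on the set $B^*$ of words) carrying the induced structure $g\cdot(x_1\cdots x_r)=(g\cdot x_1)\cdots(g\cdot x_r)$, $\deg(x_1\cdots x_r)=\deg x_1\cdots \deg x_r$. Put $[bc]:=\varphi([e,f])$ and $\chi(b,c):=\chi(g,h)$ for $b=\varphi(e)$, $c=\varphi(f)$, $e\in L_g\cap E$, $f\in L_h\cap E$. Let $\prec$ be an order on $B$, $P=\{b_1\cdots b_n\mid b_i\in B,\ b_n\prec\cdots\prec b_1,\ n\in\mathbb N\}$, $FP$ the subspace of $FB^*$ with basis $P$, and let $\lambda:FB^*\to FP$ be a linear map satisfying: (i) $\lambda(f)=f$ for $f\in P$; (ii) $\lambda(ubcv)=\chi(b,c)\lambda(ucbv)+\lambda(u[bc]v)$ for $u,v\in B^*$, $b,c\in B$; (iii) $\lambda(uv)=\lambda(\lambda(u)v)=\lambda(u\lambda(v))$ for $u,v\in FB^*$. Let $U(L)=FP$ with multiplication $u*v=\lambda(uv)$. Then $(U(L),\varphi)$ is the universal enveloping algebra of the braided m-Lie algebra $L$: $\varphi:L\to U(L)^-$ is a Lie algebra homomorphism in ${}^{FG}_{FG}\mathcal{YD}$,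 and for every algebra $W$ in ${}^{FG}_{FG}\mathcal{YD}$ and every Lie algebra homomorphism $\psi:L\to W^-$ in ${}^{FG}_{FG}\mathcal{YD}$ there exists a unique algebra homomorphism $\bar\psi:U(L)\to W$ in ${}^{FG}_{FG}\mathcal{YD}$ with $\bar\psi\circ\varphi=\psi$.
   Context: A bicharacter is a map $\chi:G\times G\to F$ with $\chi(ab,c)=\chi(a,c)\chi(b,c)$, $\chi(a,bc)=\chi(a,b)\chi(a,c)$, $\chi(a,e)=1=\chi(e,a)$. An $FG$-Yetter–Drinfeld module is a $G$-graded vector space $V=\oplus_g V_g$ with a left $G$-action such that $h\cdot V_g\subseteq V_{hgh^{-1}}$; these form the braided tensor category ${}^{FG}_{FG}\mathcal{YD}$. The braiding is determined by $\chi$ if $h\cdot x=\chi(h,g)x$ for $x\in V_g$; then $C(x\otimes y)=\chi(g,h)y\otimes x$ for $x\in V_g,y\in V_h$. An algebra in the category is an associative unital algebra which is a Yetter–Drinfeld module such that multiplication and unit respect action and grading; algebra homomorphisms in the category are algebra maps that are also Yetter–Drinfeld morphisms. For an algebra $W$ in the category, $W^-$ denotes $W$ with bracket $[x,y]=xy-\chi(g,h)yx$ for $x\in W_g$, $y\in W_h$ (extended bilinearly). A braided m-Lie algebra in the category is a Yetter–Drinfeld module $L$ with a morphism $[\ ,\ ]:L\otimes L\to L$ for which there exist an algebra $A$ in the category and an injective morphism $\phi:L\to A$ with $\phi([x,y])=\phi(x)\phi(y)-\chi(g,h)\phi(y)\phi(x)$ for $x\in L_g,y\in L_h$. A Lie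 algebra homomorphism $\psi:L\to W^-$ in the category is a Yetter–Drinfeld morphism with $\psi([x,y])=\psi(x)\psi(y)-\chi(g,h)\psi(y)\psi(x)$ for $x\in L_g,y\in L_h$. Expressions like $u[bc]v$ are understood by linearity. *)

theory Defs
  imports Main "HOL-Library.Function_Algebras"
begin

text \<open>
The group G is a type 'g of
class group_add (a not necessarily commutative group, written additively: the
product gh is g + h, the unit e is 0, h^-1 is - h).  Every vector space / YD module
/ algebra is given by a carrier set V in an ab_group_add type (its addition and zero
are those of the type), an explicit scalar multiplication, a family of homogeneous
components Vg, and an explicit G-action; algebras additionally by an explicit
multiplication and unit.
\<close>

definition module_on :: "'v::ab_group_add set \<Rightarrow> ('k::field \<Rightarrow> 'v \<Rightarrow> 'v) \<Rightarrow> bool" where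
  "module_on V s \<longleftrightarrow>
     0 \<in> V \<and> (\<forall>x\<in>V. \<forall>y\<in>V. x + y \<in> V) \<and> (\<forall>x\<in>V. - x \<in> V) \<and> (\<forall>c. \<forall>x\<in>V. s c x \<in> V) \<and>
     (\<forall>a. \<forall>x\<in>V. \<forall>y\<in>V. s a (x + y) = s a x + s a y) \<and>
     (\<forall>a b. \<forall>x\<in>V. s (a + b) x = s a x + s b x) \<and>
     (\<forall>a b. \<forall>x\<in>V. s a (s b x) = s (a * b) x) \<and>
     (\<forall>x\<in>V. s 1 x = x)"

definition lin_on :: "'v::ab_group_add set \<Rightarrow> ('k::field \<Rightarrow> 'v \<Rightarrow> 'v) \<Rightarrow>
                      'w::ab_group_add set \<Rightarrow> ('k \<Rightarrow> 'w \<Rightarrow> 'w) \<Rightarrow> ('v \<Rightarrow> 'w) \<Rightarrow> bool" where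
  "lin_on V sV W sW f \<longleftrightarrow>
     (\<forall>x\<in>V. f x \<in> W) \<and> (\<forall>x\<in>V. \<forall>y\<in>V. f (x + y) = f x + f y) \<and>
     (\<forall>c. \<forall>x\<in>V. f (sV c x) = sW c (f x))"

definition basis_on :: "'v::ab_group_add set \<Rightarrow> ('k::field \<Rightarrow> 'v \<Rightarrow> 'v) \<Rightarrow> 'v set \<Rightarrow> bool" where
  "basis_on V s E \<longleftrightarrow> E \<subseteq> V \<and>
     (\<forall>x\<in>V. \<exists>!c::'v \<Rightarrow> 'k. finite {e. c e \<noteq> 0} \<and> {e. c e \<noteq> 0} \<subseteq> E \<and>
                          x = (\<Sum>e\<in>{e. c e \<noteq> 0}. s (c e) e))"

definition graded_on :: "'v::ab_group_add set \<Rightarrow> ('k::field \<Rightarrow> 'v \<Rightarrow> 'v) \<Rightarrow> ('g \<Rightarrow> 'v set) \<Rightarrow> bool" where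
  "graded_on V s Vg \<longleftrightarrow>
     (\<forall>g. Vg g \<subseteq> V \<and> 0 \<in> Vg g \<and> (\<forall>x\<in>Vg g. \<forall>y\<in>Vg g. x + y \<in> Vg g) \<and>
          (\<forall>c. \<forall>x\<in>Vg g. s c x \<in> Vg g)) \<and>
     (\<forall>x\<in>V. \<exists>!c::'g \<Rightarrow> 'v. (\<forall>g. c g \<in> Vg g) \<and> finite {g. c g \<noteq> 0} \<and>
                          x = (\<Sum>g\<in>{g. c g \<noteq> 0}. c g))"

definition bicharacter :: "('g::group_add \<Rightarrow> 'g \<Rightarrow> 'k::field) \<Rightarrow> bool" where
  "bicharacter \<chi> \<longleftrightarrow>
     (\<forall>a b c. \<chi> (a + b) c = \<chi> a c * \<chi> b c) \<and> (\<forall>a b c. \<chi> a (b + c) = \<chi> a b * \<chi> a c) \<and>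
     (\<forall>a. \<chi> a 0 = 1 \<and> \<chi> 0 a = 1)"

definition yd_module :: "'v::ab_group_add set \<Rightarrow> ('k::field \<Rightarrow> 'v \<Rightarrow> 'v) \<Rightarrow> ('g::group_add \<Rightarrow> 'v set)
                         \<Rightarrow> ('g \<Rightarrow> 'v \<Rightarrow> 'v) \<Rightarrow> bool" where
  "yd_module V s Vg act \<longleftrightarrow>
     module_on V s \<and> graded_on V s Vg \<and>
     (\<forall>g. lin_on V s V s (act g)) \<and>
     (\<forall>x\<in>V. act 0 x = x) \<and> (\<forall>g h. \<forall>x\<in>V. act (g + h) x = act g (act h x)) \<and>
     (\<forall>h g. \<forall>x\<in>Vg g. act h x \<in> Vg (h + g + - h))"

text \<open>The braiding of V is determined by the bicharacter: h.x = chi(h,g) x for x in V_g.\<close>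
definition braiding_by :: "('g::group_add \<Rightarrow> 'g \<Rightarrow> 'k::field) \<Rightarrow> 'v::ab_group_add set \<Rightarrow>
                           ('k \<Rightarrow> 'v \<Rightarrow> 'v) \<Rightarrow> ('g \<Rightarrow> 'v set) \<Rightarrow> ('g \<Rightarrow> 'v \<Rightarrow> 'v) \<Rightarrow> bool" where
  "braiding_by \<chi> V s Vg act \<longleftrightarrow> (\<forall>g h. \<forall>x\<in>Vg g. act h x = s (\<chi> h g) x)"

definition yd_morphism :: "'v::ab_group_add set \<Rightarrow> ('k::field \<Rightarrow> 'v \<Rightarrow> 'v) \<Rightarrow> ('g::group_add \<Rightarrow> 'v set)
        \<Rightarrow> ('g \<Rightarrow> 'v \<Rightarrow> 'v) \<Rightarrow> 'w::ab_group_add set \<Rightarrow> ('k \<Rightarrow> 'w \<Rightarrow> 'w) \<Rightarrow> ('g \<Rightarrow> 'w set)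
        \<Rightarrow> ('g \<Rightarrow> 'w \<Rightarrow> 'w) \<Rightarrow> ('v \<Rightarrow> 'w) \<Rightarrow> bool" where
  "yd_morphism V sV Vg actV W sW Wg actW f \<longleftrightarrow>
     lin_on V sV W sW f \<and> (\<forall>g. \<forall>x\<in>Vg g. f x \<in> Wg g) \<and>
     (\<forall>g. \<forall>x\<in>V. f (actV g x) = actW g (f x))"

text \<open>Algebra in the category: associative unital F-algebra, YD module, with
  multiplication (a morphism from the tensor square, with diagonal action and
  product grading) and unit respecting action and grading.\<close>
definition yd_algebra :: "'v::ab_group_add set \<Rightarrow> ('k::field \<Rightarrow> 'v \<Rightarrow> 'v) \<Rightarrow> ('g::group_add \<Rightarrow> 'v set)
        \<Rightarrow> ('g \<Rightarrow> 'v \<Rightarrow> 'v) \<Rightarrow> ('v \<Rightarrow> 'v \<Rightarrow> 'v) \<Rightarrow> 'v \<Rightarrow> bool" where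
  "yd_algebra V s Vg act mult one \<longleftrightarrow>
     yd_module V s Vg act \<and> one \<in> V \<and> (\<forall>x\<in>V. \<forall>y\<in>V. mult x y \<in> V) \<and>
     (\<forall>x\<in>V. \<forall>y\<in>V. \<forall>z\<in>V. mult (x + y) z = mult x z + mult y z \<and> mult x (y + z) = mult x y + mult x z) \<and>
     (\<forall>c. \<forall>x\<in>V. \<forall>y\<in>V. mult (s c x) y = s c (mult x y) \<and> mult x (s c y) = s c (mult x y)) \<and>
     (\<forall>x\<in>V. \<forall>y\<in>V. \<forall>z\<in>V. mult (mult x y) z = mult x (mult y z)) \<and>
     (\<forall>x\<in>V. mult one x = x \<and> mult x one = x) \<and>
     (\<forall>g h. \<forall>x\<in>Vg g. \<forall>y\<in>Vg h. mult x y \<in> Vg (g + h)) \<and> one \<in> Vg 0 \<and>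
     (\<forall>h. \<forall>x\<in>V. \<forall>y\<in>V. act h (mult x y) = mult (act h x) (act h y)) \<and> (\<forall>h. act h one = one)"

definition yd_algebra_hom :: "'v::ab_group_add set \<Rightarrow> ('k::field \<Rightarrow> 'v \<Rightarrow> 'v) \<Rightarrow> ('g::group_add \<Rightarrow> 'v set)
        \<Rightarrow> ('g \<Rightarrow> 'v \<Rightarrow> 'v) \<Rightarrow> ('v \<Rightarrow> 'v \<Rightarrow> 'v) \<Rightarrow> 'v
        \<Rightarrow> 'w::ab_group_add set \<Rightarrow> ('k \<Rightarrow> 'w \<Rightarrow> 'w) \<Rightarrow> ('g \<Rightarrow> 'w set)
        \<Rightarrow> ('g \<Rightarrow> 'w \<Rightarrow> 'w) \<Rightarrow> ('w \<Rightarrow> 'w \<Rightarrow> 'w) \<Rightarrow> 'w \<Rightarrow> ('v \<Rightarrow> 'w) \<Rightarrow> bool" where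
  "yd_algebra_hom V sV Vg actV multV oneV W sW Wg actW multW oneW f \<longleftrightarrow>
     yd_morphism V sV Vg actV W sW Wg actW f \<and>
     (\<forall>x\<in>V. \<forall>y\<in>V. f (multV x y) = multW (f x) (f y)) \<and> f oneV = oneW"

text \<open>Lie algebra homomorphism psi : L \<rightarrow> W^- in the category, where the bracket of W^-
  is [x,y] = xy - chi(g,h) yx on homogeneous x in W_g, y in W_h.\<close>
definition lie_hom_minus :: "('g::group_add \<Rightarrow> 'g \<Rightarrow> 'k::field) \<Rightarrow>
        'v::ab_group_add set \<Rightarrow> ('k \<Rightarrow> 'v \<Rightarrow> 'v) \<Rightarrow> ('g \<Rightarrow> 'v set) \<Rightarrow> ('g \<Rightarrow> 'v \<Rightarrow> 'v) \<Rightarrow> ('v \<Rightarrow> 'v \<Rightarrow> 'v)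
        \<Rightarrow> 'w::ab_group_add set \<Rightarrow> ('k \<Rightarrow> 'w \<Rightarrow> 'w) \<Rightarrow> ('g \<Rightarrow> 'w set) \<Rightarrow> ('g \<Rightarrow> 'w \<Rightarrow> 'w)
        \<Rightarrow> ('w \<Rightarrow> 'w \<Rightarrow> 'w) \<Rightarrow> ('v \<Rightarrow> 'w) \<Rightarrow> bool" where
  "lie_hom_minus \<chi> L sL Lg actL br W sW Wg actW multW \<psi> \<longleftrightarrow>
     yd_morphism L sL Lg actL W sW Wg actW \<psi> \<and>
     (\<forall>g h. \<forall>x\<in>Lg g. \<forall>y\<in>Lg h.
        \<psi> (br x y) = multW (\<psi> x) (\<psi> y) - sW (\<chi> g h) (multW (\<psi> y) (\<psi> x)))"

text \<open>L with bracket br is a braided m-Lie algebra, witnessed by the algebra A in the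
  category and the injective morphism phiA : L \<rightarrow> A.  (The bracket is a YD morphism
  L \<otimes> L \<rightarrow> L: bilinear, degree-additive, and equivariant for the diagonal action.)\<close>
definition braided_mlie_witness :: "('g::group_add \<Rightarrow> 'g \<Rightarrow> 'k::field) \<Rightarrow>
        'v::ab_group_add set \<Rightarrow> ('k \<Rightarrow> 'v \<Rightarrow> 'v) \<Rightarrow> ('g \<Rightarrow> 'v set) \<Rightarrow> ('g \<Rightarrow> 'v \<Rightarrow> 'v) \<Rightarrow> ('v \<Rightarrow> 'v \<Rightarrow> 'v)
        \<Rightarrow> 'a::ab_group_add set \<Rightarrow> ('k \<Rightarrow> 'a \<Rightarrow> 'a) \<Rightarrow> ('g \<Rightarrow> 'a set) \<Rightarrow> ('g \<Rightarrow> 'a \<Rightarrow> 'a)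
        \<Rightarrow> ('a \<Rightarrow> 'a \<Rightarrow> 'a) \<Rightarrow> 'a \<Rightarrow> ('v \<Rightarrow> 'a) \<Rightarrow> bool" where
  "braided_mlie_witness \<chi> L sL Lg actL br A sA Ag actA multA oneA \<phi>A \<longleftrightarrow>
     yd_module L sL Lg actL \<and>
     (\<forall>x\<in>L. \<forall>y\<in>L. br x y \<in> L) \<and>
     (\<forall>x\<in>L. \<forall>y\<in>L. \<forall>z\<in>L. br (x + y) z = br x z + br y z \<and> br x (y + z) = br x y + br x z) \<and>
     (\<forall>c. \<forall>x\<in>L. \<forall>y\<in>L. br (sL c x) y = sL c (br x y) \<and> br x (sL c y) = sL c (br x y)) \<and>
     (\<forall>g h. \<forall>x\<in>Lg g. \<forall>y\<in>Lg h. br x y \<in> Lg (g + h)) \<and>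
     (\<forall>k. \<forall>x\<in>L. \<forall>y\<in>L. actL k (br x y) = br (actL k x) (actL k y)) \<and>
     yd_algebra A sA Ag actA multA oneA \<and>
     yd_morphism L sL Lg actL A sA Ag actA \<phi>A \<and> inj_on \<phi>A L \<and>
     (\<forall>g h. \<forall>x\<in>Lg g. \<forall>y\<in>Lg h.
        \<phi>A (br x y) = multA (\<phi>A x) (\<phi>A y) - sA (\<chi> g h) (multA (\<phi>A y) (\<phi>A x)))"

section \<open>The free algebra FB* = T(FB) on a set B, as finitely supported functions on words\<close>

definition fscale :: "'k::field \<Rightarrow> ('b list \<Rightarrow> 'k) \<Rightarrow> ('b list \<Rightarrow> 'k)" where
  "fscale c f = (\<lambda>w. c * f w)"

definition wdelta :: "'b list \<Rightarrow> ('b list \<Rightarrow> 'k::field)" where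
  "wdelta u = (\<lambda>w. if w = u then 1 else 0)"

definition conc :: "('b list \<Rightarrow> 'k::field) \<Rightarrow> ('b list \<Rightarrow> 'k) \<Rightarrow> ('b list \<Rightarrow> 'k)" where
  "conc f g = (\<lambda>w. \<Sum>i\<in>{0..length w}. f (take i w) * g (drop i w))"

definition FBstar :: "'b set \<Rightarrow> ('b list \<Rightarrow> 'k::field) set" where
  "FBstar B = {f. finite {w. f w \<noteq> 0} \<and> (\<forall>w. f w \<noteq> 0 \<longrightarrow> set w \<subseteq> B)}"

definition letter_deg :: "('g \<Rightarrow> 'l set) \<Rightarrow> 'l set \<Rightarrow> ('l \<Rightarrow> 'b) \<Rightarrow> 'b \<Rightarrow> 'g" where
  "letter_deg Lg E \<phi> b = (THE g. inv_into E \<phi> b \<in> Lg g)"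

definition word_deg :: "('b \<Rightarrow> 'g::group_add) \<Rightarrow> 'b list \<Rightarrow> 'g" where
  "word_deg d w = foldr (\<lambda>b acc. d b + acc) w 0"

definition FBstar_gr :: "'b set \<Rightarrow> ('b \<Rightarrow> 'g::group_add) \<Rightarrow> 'g \<Rightarrow> ('b list \<Rightarrow> 'k::field) set" where
  "FBstar_gr B d g = {f \<in> FBstar B. \<forall>w. f w \<noteq> 0 \<longrightarrow> word_deg d w = g}"

text \<open>Action on words: g.(x1...xr) = (g.x1)...(g.xr), where g.b = phi(g.e) for b = phi(e).\<close>
primrec act_word :: "('g \<Rightarrow> 'b \<Rightarrow> ('b list \<Rightarrow> 'k::field)) \<Rightarrow> 'g \<Rightarrow> 'b list \<Rightarrow> ('b list \<Rightarrow> 'k)" where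
  "act_word a g [] = wdelta []"
| "act_word a g (b # w) = conc (a g b) (act_word a g w)"

definition act_FBstar :: "('g \<Rightarrow> 'b \<Rightarrow> ('b list \<Rightarrow> 'k::field)) \<Rightarrow> 'g \<Rightarrow> ('b list \<Rightarrow> 'k) \<Rightarrow> ('b list \<Rightarrow> 'k)" where
  "act_FBstar a g f = (\<Sum>w\<in>{w. f w \<noteq> 0}. fscale (f w) (act_word a g w))"

text \<open>P = words b1...bn with bn \<preceq> ... \<preceq> b1 (non-strict chain).\<close>
definition Pwords :: "'b set \<Rightarrow> ('b \<Rightarrow> 'b \<Rightarrow> bool) \<Rightarrow> 'b list set" where
  "Pwords B prec = {w. set w \<subseteq> B \<and>
      (\<forall>i. Suc i < length w \<longrightarrow> prec (w ! Suc i) (w ! i) \<or> w ! Suc i = w ! i)}"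

definition FP :: "'b set \<Rightarrow> ('b \<Rightarrow> 'b \<Rightarrow> bool) \<Rightarrow> ('b list \<Rightarrow> 'k::field) set" where
  "FP B prec = {f \<in> FBstar B. \<forall>w. f w \<noteq> 0 \<longrightarrow> w \<in> Pwords B prec}"

definition strict_total_order_on :: "'b set \<Rightarrow> ('b \<Rightarrow> 'b \<Rightarrow> bool) \<Rightarrow> bool" where
  "strict_total_order_on B prec \<longleftrightarrow>
     (\<forall>x\<in>B. \<not> prec x x) \<and> (\<forall>x\<in>B. \<forall>y\<in>B. \<forall>z\<in>B. prec x y \<longrightarrow> prec y z \<longrightarrow> prec x z) \<and>
     (\<forall>x\<in>B. \<forall>y\<in>B. prec x y \<or> x = y \<or> prec y x)"

end

theory Submission
  imports Defs
begin



definition supp :: "('b list \<Rightarrow> 'k::zero) \<Rightarrow> 'b list set" where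
  "supp f = {w. f w \<noteq> 0}"

lemma sum_fun_apply: "(\<Sum>i\<in>S. F i) x = (\<Sum>i\<in>S. F i x)"
  by (induct S rule: infinite_finite_induct) auto

lemma fscale_apply[simp]: "fscale c f w = c * f w"
  by (simp add: fscale_def)

lemma wdelta_apply: "wdelta u w = (if w = u then 1 else 0)"
  by (simp add: wdelta_def)

lemma fscale_add: "fscale c (f + g) = fscale c f + fscale c g"
  by (rule ext) (simp add: algebra_simps)
lemma fscale_add2: "fscale (a + b) f = fscale a f + fscale b f"
  by (rule ext) (simp add: algebra_simps)
lemma fscale_fscale: "fscale a (fscale b f) = fscale (a * b) f"
  by (rule ext) (simp add: algebra_simps)
lemma fscale_one[simp]: "fscale 1 f = f"
  by (rule ext) simp
lemma fscale_zero[simp]: "fscale 0 f = 0" "fscale c 0 = 0"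
  by (rule ext, simp)+
lemma fscale_diff: "fscale c (f - g) = fscale c f - fscale c g"
  by (rule ext) (simp add: algebra_simps)
lemma fscale_sum: "fscale c (\<Sum>i\<in>S. F i) = (\<Sum>i\<in>S. fscale c (F i))"
  by (rule ext) (simp add: sum_fun_apply sum_distrib_left)

lemma expand_fun:
  assumes "finite S" "supp f \<subseteq> S"
  shows "f = (\<Sum>w\<in>S. fscale (f w) (wdelta w))"
proof (rule ext)
  fix x
  have "(\<Sum>w\<in>S. fscale (f w) (wdelta w)) x = (\<Sum>w\<in>S. if x = w then f w else 0)"
    unfolding sum_fun_apply by (rule sum.cong) (auto simp: wdelta_apply)
  also have "\<dots> = (if x \<in> S then f x else 0)"
    using assms(1) by (simp add: sum.delta)
  also have "\<dots> = f x" using assms(2) by (auto simp: supp_def)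
  finally show "f x = (\<Sum>w\<in>S. fscale (f w) (wdelta w)) x" by simp
qed

lemma conc_add_left: "conc (f + g) h = conc f h + conc g h"
  by (rule ext) (simp add: conc_def algebra_simps sum.distrib)
lemma conc_add_right: "conc h (f + g) = conc h f + conc h g"
  by (rule ext) (simp add: conc_def algebra_simps sum.distrib)
lemma conc_scale_left: "conc (fscale c f) h = fscale c (conc f h)"
  by (rule ext) (simp add: conc_def sum_distrib_left mult.assoc)
lemma conc_scale_right: "conc h (fscale c f) = fscale c (conc h f)"
  by (rule ext) (simp add: conc_def sum_distrib_left algebra_simps)
lemma conc_zero[simp]: "conc 0 h = 0" "conc h 0 = 0"
  by (rule ext, simp add: conc_def)+
lemma conc_diff_left: "conc (f - g) h = conc f h - conc g h"
  by (rule ext) (simp add: conc_def algebra_simps sum_subtractf)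
lemma conc_diff_right: "conc h (f - g) = conc h f - conc h g"
  by (rule ext) (simp add: conc_def algebra_simps sum_subtractf)
lemma conc_sum_left: "conc (\<Sum>i\<in>S. F i) h = (\<Sum>i\<in>S. conc (F i) h)"
proof (induct S rule: infinite_finite_induct)
  case (infinite A) then show ?case by (metis conc_zero(1) sum.infinite)
next
  case empty show ?case by (metis conc_zero(1) sum.empty)
next
  case (insert x F) then show ?case by (metis conc_add_left sum.insert)
qed
lemma conc_sum_right: "conc h (\<Sum>i\<in>S. F i) = (\<Sum>i\<in>S. conc h (F i))"
proof (induct S rule: infinite_finite_induct)
  case (infinite A) then show ?case by (metis conc_zero(2) sum.infinite)
next
  case empty show ?case by (metis conc_zero(2) sum.empty)
next
  case (insert x F) then show ?case by (metis conc_add_right sum.insert)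
qed

lemma conc_wdelta:
  fixes u v :: "'a list"
  shows "conc (wdelta u) (wdelta v) = (wdelta (u @ v) :: 'a list \<Rightarrow> 'b::field)"
proof (rule ext)
  fix w :: "'a list"
  have t: "wdelta u (take i w) * (wdelta v (drop i w) :: 'b)
        = (if i = length u \<and> w = u @ v then 1 else 0)" if i: "i \<le> length w" for i
  proof (cases "i = length u \<and> w = u @ v")
    case True then show ?thesis by (simp add: wdelta_apply)
  next
    case False
    have "\<not> (take i w = u \<and> drop i w = v)"
    proof
      assume a: "take i w = u \<and> drop i w = v"
      then have "w = u @ v" by (metis append_take_drop_id)
      moreover have "i = length u" using a i by auto
      ultimately show False using False by simp
    qed
    then show ?thesis using False by (auto simp: wdelta_apply)
  qed
  have "conc (wdelta u) (wdelta v) w = (\<Sum>i\<in>{0..length w}. (if i = length u \<and> w = u @ v then 1 else 0) :: 'b)"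
    unfolding conc_def by (rule sum.cong[OF refl]) (simp add: t)
  also have "\<dots> = wdelta (u @ v) w"
    by (auto simp: wdelta_apply)
  finally show "conc (wdelta u) (wdelta v) w = (wdelta (u @ v) w :: 'b)" .
qed

lemma conc_one_left[simp]: "conc (wdelta []) f = f"
proof (rule ext)
  fix w
  have "conc (wdelta []) f w = (\<Sum>i\<in>{0..length w}. if i = 0 then f w else 0)"
    unfolding conc_def by (rule sum.cong) (auto simp: wdelta_apply)
  then show "conc (wdelta []) f w = f w" by simp
qed

lemma conc_one_right[simp]: "conc f (wdelta []) = f"
proof (rule ext)
  fix w
  have "conc f (wdelta []) w = (\<Sum>i\<in>{0..length w}. if i = length w then f w else 0)"
    unfolding conc_def by (rule sum.cong) (auto simp: wdelta_apply)
  then show "conc f (wdelta []) w = f w" by simp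
qed




lemma tri_swap: "(\<Sum>i=0..n. \<Sum>j=0..i. T j i) = (\<Sum>j=0..(n::nat). \<Sum>i=j..n. (T j i :: 'a::comm_monoid_add))"
proof (induct n)
  case 0 then show ?case by simp
next
  case (Suc n)
  have "(\<Sum>j=0..Suc n. \<Sum>i=j..Suc n. T j i) = (\<Sum>j=0..n. \<Sum>i=j..Suc n. T j i) + T (Suc n) (Suc n)"
    by simp
  also have "\<dots> = (\<Sum>j=0..n. (\<Sum>i=j..n. T j i) + T j (Suc n)) + T (Suc n) (Suc n)"
    by (intro arg_cong2[where f="(+)"] sum.cong refl) simp
  also have "\<dots> = (\<Sum>i=0..Suc n. \<Sum>j=0..i. T j i)"
    using Suc by (simp add: sum.distrib add.assoc)
  finally show ?case by simp
qed

lemma conc_assoc: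
  fixes f g h :: "'a list \<Rightarrow> 'k::field"
  shows "conc (conc f g) h = conc f (conc g h)"
proof (rule ext)
  fix w :: "'a list"
  define n where "n = length w"
  have "conc (conc f g) h w = (\<Sum>i=0..n. \<Sum>j=0..i. f (take j w) * g (drop j (take i w)) * h (drop i w))"
    unfolding conc_def n_def sum_distrib_right
    by (rule sum.cong[OF refl]) (simp add: min_def)
  also have "\<dots> = (\<Sum>j=0..n. \<Sum>i=j..n. f (take j w) * g (drop j (take i w)) * h (drop i w))"
    by (rule tri_swap)
  also have "\<dots> = conc f (conc g h) w"
    unfolding conc_def n_def sum_distrib_left
  proof (rule sum.cong[OF refl])
    fix j assume j: "j \<in> {0..length w}"
    have "(\<Sum>k=0..length (drop j w). f (take j w) * (g (take k (drop j w)) * h (drop k (drop j w))))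
        = (\<Sum>k=0..length w - j. f (take j w) * g (drop j (take (k + j) w)) * h (drop (k + j) w))"
      by (simp add: take_drop mult.assoc add.commute)
    also have "\<dots> = (\<Sum>i=j..length w. f (take j w) * g (drop j (take i w)) * h (drop i w))"
      using j by (intro sum.reindex_bij_witness[where i="\<lambda>i. i - j" and j="\<lambda>k. k + j"]) auto
    finally show "(\<Sum>i=j..length w. f (take j w) * g (drop j (take i w)) * h (drop i w))
      = (\<Sum>k=0..length (drop j w). f (take j w) * (g (take k (drop j w)) * h (drop k (drop j w))))"
      by simp
  qed
  finally show "conc (conc f g) h w = (conc f (conc g h) w :: 'k)" .
qed




lemma FBstar_iff: "f \<in> FBstar B \<longleftrightarrow> finite (supp f) \<and> (\<forall>w\<in>supp f. set w \<subseteq> B)"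
  by (auto simp: FBstar_def supp_def)

lemma FP_iff: "f \<in> FP B prec \<longleftrightarrow> finite (supp f) \<and> (\<forall>w\<in>supp f. w \<in> Pwords B prec)"
  by (auto simp: FP_def FBstar_def supp_def Pwords_def)

lemma FP_sub: "FP B prec \<subseteq> FBstar B"
  by (auto simp: FP_def)

lemma supp_add: "supp (f + g :: 'b list \<Rightarrow> 'k::ab_group_add) \<subseteq> supp f \<union> supp g"
  by (auto simp: supp_def)
lemma supp_uminus[simp]: "supp (- f :: 'b list \<Rightarrow> 'k::ab_group_add) = supp f"
  by (auto simp: supp_def)
lemma supp_diff: "supp (f - g :: 'b list \<Rightarrow> 'k::ab_group_add) \<subseteq> supp f \<union> supp g"
  by (auto simp: supp_def)
lemma supp_fscale: "supp (fscale c f) \<subseteq> supp f"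
  by (auto simp: supp_def)
lemma supp_zero[simp]: "supp 0 = {}"
  by (auto simp: supp_def)
lemma supp_wdelta: "supp (wdelta w) = {w}"
  by (auto simp: supp_def wdelta_apply)
lemma supp_sum: "supp (\<Sum>i\<in>S. F i) \<subseteq> (\<Union>i\<in>S. supp (F i))"
  by (induct S rule: infinite_finite_induct) (auto simp: supp_def)

lemma supp_conc: "supp (conc f g) \<subseteq> (\<lambda>(u,v). u @ v) ` (supp f \<times> supp g)"
proof
  fix w assume "w \<in> supp (conc f g)"
  then have "(\<Sum>i\<in>{0..length w}. f (take i w) * g (drop i w)) \<noteq> 0"
    by (simp add: supp_def conc_def)
  then obtain i where "f (take i w) * g (drop i w) \<noteq> 0"
    by (meson sum.neutral)
  then have "take i w \<in> supp f" "drop i w \<in> supp g" by (auto simp: supp_def)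
  then show "w \<in> (\<lambda>(u,v). u @ v) ` (supp f \<times> supp g)"
    by (metis append_take_drop_id mem_Sigma_iff pair_imageI)
qed

lemma FBstar_supp2: assumes "f \<in> FBstar B" "g \<in> FBstar B" "supp h \<subseteq> supp f \<union> supp g"
  shows "h \<in> FBstar B"
proof -
  have "finite (supp h)" using assms unfolding FBstar_iff by (meson finite_Un finite_subset)
  moreover have "\<forall>w\<in>supp h. set w \<subseteq> B" using assms unfolding FBstar_iff by blast
  ultimately show ?thesis unfolding FBstar_iff by blast
qed

lemma FP_supp2: assumes "f \<in> FP B prec" "g \<in> FP B prec" "supp h \<subseteq> supp f \<union> supp g"
  shows "h \<in> FP B prec"
proof -
  have "finite (supp h)" using assms unfolding FP_iff by (meson finite_Un finite_subset)
  moreover have "\<forall>w\<in>supp h. w \<in> Pwords B prec" using assms unfolding FP_iff by blast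
  ultimately show ?thesis unfolding FP_iff by blast
qed

lemma FBstar_zero: "0 \<in> FBstar B" by (simp add: FBstar_iff)
lemma FBstar_add: "f \<in> FBstar B \<Longrightarrow> g \<in> FBstar B \<Longrightarrow> f + g \<in> FBstar B"
  by (rule FBstar_supp2[OF _ _ supp_add])
lemma FBstar_uminus: "f \<in> FBstar B \<Longrightarrow> - f \<in> FBstar B"
  by (rule FBstar_supp2[of f B f]) auto
lemma FBstar_diff: "f \<in> FBstar B \<Longrightarrow> g \<in> FBstar B \<Longrightarrow> f - g \<in> FBstar B"
  by (rule FBstar_supp2[OF _ _ supp_diff])
lemma FBstar_fscale: "f \<in> FBstar B \<Longrightarrow> fscale c f \<in> FBstar B"
  by (rule FBstar_supp2[of f B f]) (use supp_fscale in auto)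
lemma FBstar_sum: "(\<And>i. i \<in> S \<Longrightarrow> F i \<in> FBstar B) \<Longrightarrow> (\<Sum>i\<in>S. F i) \<in> FBstar B"
proof (induct S rule: infinite_finite_induct)
  case (infinite A) then show ?case by (metis FBstar_zero sum.infinite)
next
  case empty then show ?case by (metis FBstar_zero sum.empty)
next
  case (insert x S)
  have "F x \<in> FBstar B" "sum F S \<in> FBstar B" using insert by auto
  then have "F x + sum F S \<in> FBstar B" by (rule FBstar_add)
  then show ?case using insert(1,2) by (metis sum.insert)
qed
lemma FBstar_wdelta: "set w \<subseteq> B \<Longrightarrow> wdelta w \<in> FBstar B"
  by (simp add: FBstar_iff supp_wdelta)
lemma FBstar_conc: assumes "f \<in> FBstar B" "g \<in> FBstar B" shows "conc f g \<in> FBstar B"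
  unfolding FBstar_iff
proof
  have "finite ((\<lambda>(u,v). u @ v) ` (supp f \<times> supp g))"
    by (intro finite_imageI finite_cartesian_product) (use assms in \<open>auto simp: FBstar_iff\<close>)
  then show "finite (supp (conc f g))" using supp_conc[of f g] by (rule finite_subset[rotated])
  show "\<forall>w\<in>supp (conc f g). set w \<subseteq> B"
  proof
    fix w assume "w \<in> supp (conc f g)"
    then have "w \<in> (\<lambda>(u,v). u @ v) ` (supp f \<times> supp g)" by (rule subsetD[OF supp_conc])
    then obtain p where p: "p \<in> supp f \<times> supp g" "w = (\<lambda>(u,v). u @ v) p" by (rule imageE)
    obtain u v where uv: "p = (u, v)" by (cases p)
    have "u \<in> supp f" "v \<in> supp g" "w = u @ v" using p uv by auto
    then show "set w \<subseteq> B" using assms unfolding FBstar_iff by auto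
  qed
qed

lemma FP_zero: "0 \<in> FP B prec" by (simp add: FP_iff)
lemma FP_add: "f \<in> FP B prec \<Longrightarrow> g \<in> FP B prec \<Longrightarrow> f + g \<in> FP B prec"
  by (rule FP_supp2[OF _ _ supp_add])
lemma FP_uminus: "f \<in> FP B prec \<Longrightarrow> - f \<in> FP B prec"
  by (rule FP_supp2[of f B prec f]) auto
lemma FP_diff: "f \<in> FP B prec \<Longrightarrow> g \<in> FP B prec \<Longrightarrow> f - g \<in> FP B prec"
  by (rule FP_supp2[OF _ _ supp_diff])
lemma FP_fscale: "f \<in> FP B prec \<Longrightarrow> fscale c f \<in> FP B prec"
  by (rule FP_supp2[of f B prec f]) (use supp_fscale in auto)
lemma FP_sum: "(\<And>i. i \<in> S \<Longrightarrow> F i \<in> FP B prec) \<Longrightarrow> (\<Sum>i\<in>S. F i) \<in> FP B prec"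
proof (induct S rule: infinite_finite_induct)
  case (infinite A) then show ?case by (metis FP_zero sum.infinite)
next
  case empty then show ?case by (metis FP_zero sum.empty)
next
  case (insert x S)
  have "F x \<in> FP B prec" "sum F S \<in> FP B prec" using insert by auto
  then have "F x + sum F S \<in> FP B prec" by (rule FP_add)
  then show ?case using insert(1,2) by (metis sum.insert)
qed
lemma FP_wdelta: "w \<in> Pwords B prec \<Longrightarrow> wdelta w \<in> FP B prec"
  by (simp add: FP_iff supp_wdelta)

lemma expand: "f \<in> FBstar B \<Longrightarrow> f = (\<Sum>w\<in>supp f. fscale (f w) (wdelta w))"
  by (rule expand_fun) (auto simp: FBstar_iff)

lemma Pwords_short: "set w \<subseteq> B \<Longrightarrow> length w \<le> 1 \<Longrightarrow> w \<in> Pwords B prec"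
  by (auto simp: Pwords_def)

lemma Pwords_tl: "b # w \<in> Pwords B prec \<Longrightarrow> w \<in> Pwords B prec"
  by (auto simp: Pwords_def)



section \<open>Generic modules and linear maps\<close>

lemma module_onD: assumes "module_on V s"
  shows "0 \<in> V" "x \<in> V \<Longrightarrow> y \<in> V \<Longrightarrow> x + y \<in> V" "x \<in> V \<Longrightarrow> - x \<in> V"
    "x \<in> V \<Longrightarrow> s c x \<in> V" "x \<in> V \<Longrightarrow> y \<in> V \<Longrightarrow> s a (x + y) = s a x + s a y"
    "x \<in> V \<Longrightarrow> s (a + b) x = s a x + s b x" "x \<in> V \<Longrightarrow> s a (s b x) = s (a * b) x"
    "x \<in> V \<Longrightarrow> s 1 x = x"
  using assms unfolding module_on_def by blast+

lemma lin_onD: assumes "lin_on V sV W sW T"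
  shows "x \<in> V \<Longrightarrow> T x \<in> W" "x \<in> V \<Longrightarrow> y \<in> V \<Longrightarrow> T (x + y) = T x + T y"
    "x \<in> V \<Longrightarrow> T (sV c x) = sW c (T x)"
  using assms unfolding lin_on_def by blast+

lemma module_scale0: assumes "module_on V s" "x \<in> V" shows "s 0 x = 0"
proof -
  have "s 0 x = s (0 + 0) x" by simp
  also have "\<dots> = s 0 x + s 0 x" using module_onD(6)[OF assms] .
  finally show ?thesis by (metis add_cancel_right_right)
qed

lemma module_scale_zero: assumes "module_on V s" shows "s c 0 = 0"
proof -
  have "s c 0 = s c (0 + 0)" by simp
  also have "\<dots> = s c 0 + s c 0" using module_onD(5)[OF assms module_onD(1)[OF assms] module_onD(1)[OF assms]] .
  finally show ?thesis by (metis add_cancel_right_right)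
qed

lemma module_diff: assumes "module_on V s" "x \<in> V" "y \<in> V" shows "x - y \<in> V"
  using module_onD(2)[OF assms(1) assms(2) module_onD(3)[OF assms(1,3)]] by simp

lemma module_sum: assumes "module_on V s" "\<And>i. i \<in> S \<Longrightarrow> F i \<in> V" shows "(\<Sum>i\<in>S. F i) \<in> V"
  using assms(2)
proof (induct S rule: infinite_finite_induct)
  case (infinite A) then show ?case using assms(1) by (simp add: module_on_def)
next
  case empty then show ?case using assms(1) by (simp add: module_on_def)
next
  case (insert x F) then show ?case using assms(1) by (simp add: module_on_def)
qed

lemma module_scale_sum: assumes "module_on V s" "\<And>i. i \<in> S \<Longrightarrow> F i \<in> V"
  shows "s c (\<Sum>i\<in>S. F i) = (\<Sum>i\<in>S. s c (F i))"
  using assms(2)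
proof (induct S rule: infinite_finite_induct)
  case (infinite A) then show ?case using module_scale_zero[OF assms(1)] by simp
next
  case empty then show ?case using module_scale_zero[OF assms(1)] by simp
next
  case (insert x S)
  have "F x \<in> V" "sum F S \<in> V" using insert module_sum[OF assms(1), of S F] by auto
  then have "s c (F x + sum F S) = s c (F x) + s c (sum F S)" using assms(1) by (simp add: module_on_def)
  then show ?case using insert by (metis sum.insert insertCI)
qed

lemma lin_zero: assumes "lin_on V sV W sW T" "module_on V sV" "module_on W sW" shows "T 0 = 0"
proof -
  have "T 0 = T (sV 0 0)" using module_scale_zero[OF assms(2)] by simp
  also have "\<dots> = sW 0 (T 0)" using lin_onD(3)[OF assms(1) module_onD(1)[OF assms(2)]] .
  also have "\<dots> = 0" using module_scale0[OF assms(3) lin_onD(1)[OF assms(1) module_onD(1)[OF assms(2)]]] .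
  finally show ?thesis .
qed

lemma lin_sum: assumes "lin_on V sV W sW T" "module_on V sV" "module_on W sW"
  "\<And>i. i \<in> S \<Longrightarrow> F i \<in> V"
  shows "T (\<Sum>i\<in>S. F i) = (\<Sum>i\<in>S. T (F i))"
  using assms(4)
proof (induct S rule: infinite_finite_induct)
  case (infinite A) then show ?case using lin_zero[OF assms(1-3)] by simp
next
  case empty then show ?case using lin_zero[OF assms(1-3)] by simp
next
  case (insert x S)
  have "F x \<in> V" "sum F S \<in> V" using insert module_sum[OF assms(2), of S F] by auto
  then have "T (F x + sum F S) = T (F x) + T (sum F S)" using assms(1) by (simp add: lin_on_def)
  then show ?case using insert by (metis sum.insert insertCI)
qed

lemma lin_uminus: assumes "lin_on V sV W sW T" "module_on V sV" "module_on W sW" "x \<in> V"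
  shows "T (- x) = - T x"
proof -
  have "T (x + - x) = T x + T (- x)" using lin_onD(2)[OF assms(1) assms(4) module_onD(3)[OF assms(2,4)]] .
  then have "T x + T (- x) = 0" using lin_zero[OF assms(1-3)] by simp
  then show ?thesis by (metis add.commute add_eq_0_iff)
qed

lemma lin_diff: assumes "lin_on V sV W sW T" "module_on V sV" "module_on W sW" "x \<in> V" "y \<in> V"
  shows "T (x - y) = T x - T y"
proof -
  have "T (x + - y) = T x + T (- y)" using lin_onD(2)[OF assms(1) assms(4) module_onD(3)[OF assms(2,5)]] .
  then show ?thesis using lin_uminus[OF assms(1-3,5)] by simp
qed

lemma module_fun: "module_on (UNIV :: ('b list \<Rightarrow> 'k::field) set) fscale"
  by (simp add: module_on_def fscale_add fscale_add2 fscale_fscale)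
lemma module_FBstar: "module_on (FBstar B :: ('b list \<Rightarrow> 'k::field) set) fscale"
  by (simp add: module_on_def fscale_add fscale_add2 fscale_fscale FBstar_zero FBstar_add
      FBstar_uminus FBstar_fscale)
lemma module_FP: "module_on (FP B prec :: ('b list \<Rightarrow> 'k::field) set) fscale"
  by (simp add: module_on_def fscale_add fscale_add2 fscale_fscale FP_zero FP_add
      FP_uminus FP_fscale)




lemma word_deg_Nil[simp]: "word_deg d [] = 0"
  by (simp add: word_deg_def)
lemma word_deg_Cons[simp]: "word_deg d (b # w) = d b + word_deg d w"
  by (simp add: word_deg_def)
lemma word_deg_append[simp]: "word_deg d (u @ v) = word_deg d u + word_deg d v"
  by (induct u) (simp_all add: add.assoc)

definition central :: "'g::group_add \<Rightarrow> bool" where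
  "central g \<longleftrightarrow> (\<forall>h. h + g = g + h)"

lemma central_0: "central 0" by (simp add: central_def)
lemma central_add: "central a \<Longrightarrow> central b \<Longrightarrow> central (a + b)"
  unfolding central_def by (metis add.assoc)
lemma central_word_deg: "(\<And>b. b \<in> set w \<Longrightarrow> central (d b)) \<Longrightarrow> central (word_deg d w)"
  by (induct w) (auto simp: central_0 central_add)
lemma central_conj: "central g \<Longrightarrow> h + g + - h = g"
  unfolding central_def by (metis add.assoc add.right_inverse add_0_right)

section \<open>Inversions and the reduction induction\<close>

fun ninv :: "('b \<Rightarrow> 'b \<Rightarrow> bool) \<Rightarrow> 'b list \<Rightarrow> nat" where
  "ninv p [] = 0"
| "ninv p (x # xs) = length (filter (p x) xs) + ninv p xs"

lemma ninv_swap: "p b c \<Longrightarrow> \<not> p c b \<Longrightarrow> ninv p (u @ b # c # v) = Suc (ninv p (u @ c # b # v))"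
  by (induct u) auto

lemma order_asym: "strict_total_order_on B prec \<Longrightarrow> b \<in> B \<Longrightarrow> c \<in> B \<Longrightarrow> prec b c \<Longrightarrow> \<not> prec c b"
  unfolding strict_total_order_on_def by blast

lemma not_Pwords_split:
  assumes ord: "strict_total_order_on B prec" and w: "set w \<subseteq> B" "w \<notin> Pwords B prec"
  shows "\<exists>u b c v. w = u @ b # c # v \<and> prec b c"
proof -
  obtain i where i: "Suc i < length w" "\<not> (prec (w ! Suc i) (w ! i) \<or> w ! Suc i = w ! i)"
    using w unfolding Pwords_def by auto
  have "w ! i \<in> B" "w ! Suc i \<in> B" using i(1) w(1) by (auto intro: nth_mem[THEN subsetD[OF w(1)]])
  then have p: "prec (w ! i) (w ! Suc i)" using ord i(2) unfolding strict_total_order_on_def by blast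
  have "w = take i w @ w ! i # drop (Suc i) w" using i(1) by (simp add: id_take_nth_drop)
  also have "drop (Suc i) w = w ! Suc i # drop (Suc (Suc i)) w" using i(1) by (simp add: Cons_nth_drop_Suc)
  finally show ?thesis using p by blast
qed

lemma reduce_induct:
  assumes ord: "strict_total_order_on B prec"
    and P: "\<And>w. w \<in> Pwords B prec \<Longrightarrow> Q w"
    and step: "\<And>u b c v. set u \<subseteq> B \<Longrightarrow> set v \<subseteq> B \<Longrightarrow> b \<in> B \<Longrightarrow> c \<in> B \<Longrightarrow> prec b c
        \<Longrightarrow> Q (u @ c # b # v)
        \<Longrightarrow> (\<And>w'. set w' \<subseteq> B \<Longrightarrow> length w' < Suc (Suc (length u + length v)) \<Longrightarrow> Q w')
        \<Longrightarrow> Q (u @ b # c # v)"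
    and w: "set w \<subseteq> B"
  shows "Q w"
proof -
  have "\<forall>w. length w = n \<longrightarrow> ninv prec w = m \<longrightarrow> set w \<subseteq> B \<longrightarrow> Q w" for n m
  proof (induct n arbitrary: m rule: less_induct)
    case (less n)
    note IHn = less
    show ?case
    proof (induct m rule: less_induct)
      case (less m)
      show ?case
      proof (intro allI impI)
        fix w assume wn: "length w = n" and wm: "ninv prec w = m" and wB: "set w \<subseteq> B"
        show "Q w"
        proof (cases "w \<in> Pwords B prec")
          case True then show ?thesis by (rule P)
        next
          case False
          then obtain u b c v where wd: "w = u @ b # c # v" and bc: "prec b c"
            using not_Pwords_split[OF ord wB] by blast
          have B: "set u \<subseteq> B" "set v \<subseteq> B" "b \<in> B" "c \<in> B" using wB wd by auto
          have nbc: "\<not> prec c b" using order_asym[OF ord B(3,4) bc] .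
          have "ninv prec w = Suc (ninv prec (u @ c # b # v))"
            using ninv_swap[of prec b c u v, OF bc nbc] wd by simp
          then have Q1: "Q (u @ c # b # v)"
            using less.hyps[of "ninv prec (u @ c # b # v)"] wm wn wd B by auto
          have Q2: "Q w'" if "set w' \<subseteq> B" "length w' < Suc (Suc (length u + length v))" for w'
            using IHn[of "length w'"]
              that wn wd by auto
          show "Q w" using step[OF B bc Q1 Q2] wd by simp
        qed
      qed
    qed
  qed
  then show ?thesis using w by blast
qed




locale pbw =
  fixes \<chi> :: "'g::group_add \<Rightarrow> 'g \<Rightarrow> 'k::field"
    and sL :: "'k \<Rightarrow> 'l::ab_group_add \<Rightarrow> 'l" and Lg :: "'g \<Rightarrow> 'l set"
    and actL :: "'g \<Rightarrow> 'l \<Rightarrow> 'l" and br :: "'l \<Rightarrow> 'l \<Rightarrow> 'l"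
    and A :: "'a::ab_group_add set" and sA :: "'k \<Rightarrow> 'a \<Rightarrow> 'a" and Ag :: "'g \<Rightarrow> 'a set"
    and actA :: "'g \<Rightarrow> 'a \<Rightarrow> 'a" and multA :: "'a \<Rightarrow> 'a \<Rightarrow> 'a" and oneA :: 'a
    and \<phi>A :: "'l \<Rightarrow> 'a"
    and E :: "'l set" and B :: "'b set" and \<phi> :: "'l \<Rightarrow> 'b"
    and \<phi>L :: "'l \<Rightarrow> ('b list \<Rightarrow> 'k)"
    and prec :: "'b \<Rightarrow> 'b \<Rightarrow> bool"
    and lam :: "('b list \<Rightarrow> 'k) \<Rightarrow> ('b list \<Rightarrow> 'k)"
  assumes bichar: "bicharacter \<chi>"
    and mlie: "braided_mlie_witness \<chi> UNIV sL Lg actL br A sA Ag actA multA oneA \<phi>A"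
    and braid: "braiding_by \<chi> UNIV sL Lg actL"
    and basis: "basis_on UNIV sL E"
    and homog: "\<forall>e\<in>E. \<exists>g. e \<in> Lg g"
    and bij: "bij_betw \<phi> E B"
    and phiL_lin: "lin_on UNIV sL (FBstar B) fscale \<phi>L"
    and phiL_E: "\<forall>e\<in>E. \<phi>L e = wdelta [\<phi> e]"
    and order: "strict_total_order_on B prec"
    and lam_lin: "lin_on (FBstar B) fscale (FP B prec) fscale lam"
    and lam_i: "\<forall>w\<in>Pwords B prec. lam (wdelta w) = wdelta w"
    and lam_ii: "\<forall>u v. set u \<subseteq> B \<longrightarrow> set v \<subseteq> B \<longrightarrow> (\<forall>b\<in>B. \<forall>c\<in>B.
        lam (wdelta (u @ b # c # v)) =
          fscale (\<chi> (letter_deg Lg E \<phi> b) (letter_deg Lg E \<phi> c)) (lam (wdelta (u @ c # b # v)))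
          + lam (conc (conc (wdelta u) (\<phi>L (br (inv_into E \<phi> b) (inv_into E \<phi> c)))) (wdelta v)))"
    and lam_iii: "\<forall>u\<in>FBstar B. \<forall>v\<in>FBstar B.
        lam (conc u v) = lam (conc (lam u) v) \<and> lam (conc u v) = lam (conc u (lam v))"
begin

abbreviation "d \<equiv> letter_deg Lg E \<phi>"
abbreviation "eb \<equiv> inv_into E \<phi>"

lemma ydL: "yd_module UNIV sL Lg actL"
  using mlie by (simp add: braided_mlie_witness_def)

lemma modL: "module_on UNIV sL" using ydL by (simp add: yd_module_def)
lemma gradedL: "graded_on UNIV sL Lg" using ydL by (simp add: yd_module_def)
lemma actL_lin: "lin_on UNIV sL UNIV sL (actL h)" using ydL by (simp add: yd_module_def)

lemma Lg_closed: "0 \<in> Lg g" "x \<in> Lg g \<Longrightarrow> y \<in> Lg g \<Longrightarrow> x + y \<in> Lg g" "x \<in> Lg g \<Longrightarrow> sL c x \<in> Lg g"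
  using gradedL unfolding graded_on_def by blast+

lemma br_add: "br (x + y) z = br x z + br y z" "br x (y + z) = br x y + br x z"
  using mlie unfolding braided_mlie_witness_def by blast+
lemma br_scale: "br (sL c x) y = sL c (br x y)" "br x (sL c y) = sL c (br x y)"
  using mlie unfolding braided_mlie_witness_def by blast+
lemma br_grade: "x \<in> Lg g \<Longrightarrow> y \<in> Lg h \<Longrightarrow> br x y \<in> Lg (g + h)"
  using mlie unfolding braided_mlie_witness_def by blast

lemma sL_add: "sL c (x + y) = sL c x + sL c y" using module_onD(5)[OF modL] by simp
lemma sL_add2: "sL (a + b) x = sL a x + sL b x" using module_onD(6)[OF modL] by simp
lemma sL_sL: "sL a (sL b x) = sL (a * b) x" using module_onD(7)[OF modL] by simp
lemma sL_one: "sL 1 x = x" using module_onD(8)[OF modL] by simp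
lemma sL_zero: "sL 0 x = 0" using module_scale0[OF modL] by simp
lemma sL_zero2: "sL c 0 = 0" using module_scale_zero[OF modL] by simp

lemma br_zero: "br 0 y = 0" "br x 0 = 0"
proof -
  have "br (sL 0 0) y = sL 0 (br 0 y)" by (rule br_scale)
  then show "br 0 y = 0" by (simp add: sL_zero)
  have "br x (sL 0 0) = sL 0 (br x 0)" by (rule br_scale)
  then show "br x 0 = 0" by (simp add: sL_zero)
qed

lemma chi_add: "\<chi> (a + b) c = \<chi> a c * \<chi> b c" "\<chi> a (b + c) = \<chi> a b * \<chi> a c"
  "\<chi> a 0 = 1" "\<chi> 0 a = 1"
  using bichar unfolding bicharacter_def by blast+

lemma chi_nz: "\<chi> h g \<noteq> 0"
proof
  assume "\<chi> h g = 0"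
  moreover have "\<chi> 0 g = \<chi> h g * \<chi> (- h) g" by (metis chi_add(1) add.right_inverse)
  ultimately show False by (simp add: chi_add(4))
qed

lemma basis_repr: "\<exists>!c::'l \<Rightarrow> 'k. finite {e. c e \<noteq> 0} \<and> {e. c e \<noteq> 0} \<subseteq> E \<and>
                          x = (\<Sum>e\<in>{e. c e \<noteq> 0}. sL (c e) e)"
  using basis unfolding basis_on_def by blast

lemma graded_repr: "\<exists>!c::'g \<Rightarrow> 'l. (\<forall>g. c g \<in> Lg g) \<and> finite {g. c g \<noteq> 0} \<and>
                          x = (\<Sum>g\<in>{g. c g \<noteq> 0}. c g)"
  using gradedL unfolding graded_on_def by blast

lemma E_nz: assumes "e \<in> E" shows "e \<noteq> 0"
proof
  assume e0: "e = 0"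
  define c1 :: "'l \<Rightarrow> 'k" where "c1 = (\<lambda>_. 0)"
  define c2 :: "'l \<Rightarrow> 'k" where "c2 = (\<lambda>x. if x = e then 1 else 0)"
  have s2: "{x. c2 x \<noteq> 0} = {e}" by (auto simp: c2_def)
  have "c1 = c2"
    using basis_repr[of 0] unfolding Uniq_def
  proof -
    have a: "finite {x. c1 x \<noteq> 0} \<and> {x. c1 x \<noteq> 0} \<subseteq> E \<and> (0::'l) = (\<Sum>x\<in>{x. c1 x \<noteq> 0}. sL (c1 x) x)"
      by (simp add: c1_def)
    have b: "finite {x. c2 x \<noteq> 0} \<and> {x. c2 x \<noteq> 0} \<subseteq> E \<and> (0::'l) = (\<Sum>x\<in>{x. c2 x \<noteq> 0}. sL (c2 x) x)"
      using assms e0 s2 by (simp add: c2_def sL_one)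
    show ?thesis using basis_repr[of 0] a b by blast
  qed
  then have "c1 e = c2 e" by simp
  then show False by (simp add: c1_def c2_def)
qed

lemma Lg_unique: assumes "x \<in> Lg g" "x \<in> Lg h" "x \<noteq> 0" shows "g = h"
proof (rule ccontr)
  assume gh: "g \<noteq> h"
  define c1 where "c1 = (\<lambda>k. if k = g then x else 0)"
  define c2 where "c2 = (\<lambda>k. if k = h then x else 0)"
  have s1: "{k. c1 k \<noteq> 0} = {g}" using assms(3) by (auto simp: c1_def)
  have s2: "{k. c2 k \<noteq> 0} = {h}" using assms(3) by (auto simp: c2_def)
  have a: "(\<forall>k. c1 k \<in> Lg k) \<and> finite {k. c1 k \<noteq> 0} \<and> x = (\<Sum>k\<in>{k. c1 k \<noteq> 0}. c1 k)"
    using assms s1 by (simp add: c1_def Lg_closed)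
  have b: "(\<forall>k. c2 k \<in> Lg k) \<and> finite {k. c2 k \<noteq> 0} \<and> x = (\<Sum>k\<in>{k. c2 k \<noteq> 0}. c2 k)"
    using assms s2 by (simp add: c2_def Lg_closed)
  have "c1 = c2" using graded_repr[of x] a b by blast
  then have "c1 g = c2 g" by simp
  then show False using gh assms(3) by (simp add: c1_def c2_def)
qed

lemma eb_E: "b \<in> B \<Longrightarrow> eb b \<in> E"
  using bij by (metis bij_betw_def inv_into_into)
lemma phi_eb: "b \<in> B \<Longrightarrow> \<phi> (eb b) = b"
  using bij by (meson bij_betw_inv_into_right)
lemma eb_phi: "e \<in> E \<Longrightarrow> eb (\<phi> e) = e"
  using bij by (metis bij_betw_def inv_into_f_f)
lemma phi_B: "e \<in> E \<Longrightarrow> \<phi> e \<in> B"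
  using bij by (metis bij_betw_def imageI)

lemma d_phi: assumes "e \<in> E" "e \<in> Lg g" shows "d (\<phi> e) = g"
  unfolding letter_deg_def eb_phi[OF assms(1)]
  using assms Lg_unique E_nz by blast

lemma eb_deg: assumes "b \<in> B" shows "eb b \<in> Lg (d b)"
proof -
  obtain g where g: "eb b \<in> Lg g" using homog eb_E[OF assms] by blast
  have "d b = g" using d_phi[OF eb_E[OF assms] g] phi_eb[OF assms] by simp
  then show ?thesis using g by simp
qed

lemma actL_E: assumes "x \<in> Lg g" shows "actL h x = sL (\<chi> h g) x"
  using braid assms unfolding braiding_by_def by blast

lemma actL_grade: assumes "x \<in> Lg g" shows "actL h x \<in> Lg (h + g + - h)"
  using ydL assms unfolding yd_module_def by blast

lemma E_central: assumes "e \<in> E" "e \<in> Lg g" shows "central g"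
proof -
  have "g = h + g + - h" for h
  proof -
    have "sL (\<chi> h g) e \<in> Lg (h + g + - h)" using actL_grade[OF assms(2)] actL_E[OF assms(2)] by simp
    then have "sL (inverse (\<chi> h g)) (sL (\<chi> h g) e) \<in> Lg (h + g + - h)" by (rule Lg_closed)
    then have "e \<in> Lg (h + g + - h)" using chi_nz by (simp add: sL_sL sL_one)
    then show ?thesis using Lg_unique[OF assms(2)] E_nz[OF assms(1)] by blast
  qed
  then show ?thesis unfolding central_def by (metis add.assoc add_0_right add.left_inverse)
qed

lemma d_central: "b \<in> B \<Longrightarrow> central (d b)"
  using E_central eb_E eb_deg by blast

end



context pbw begin

lemma span_sum:
  assumes P0: "P 0" and Padd: "\<And>x y. P x \<Longrightarrow> P y \<Longrightarrow> P (x + y)" and Ps: "\<And>c x. P x \<Longrightarrow> P (sL c x)"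
    and S: "\<And>e. e \<in> S \<Longrightarrow> P e"
  shows "P (\<Sum>e\<in>S. sL (c e) e)"
  using S
proof (induct S rule: infinite_finite_induct)
  case (infinite A) then show ?case using P0 by simp
next
  case empty then show ?case using P0 by simp
next
  case (insert x S) then show ?case using Padd Ps by simp
qed

lemma span_all:
  assumes P0: "P 0" and Padd: "\<And>x y. P x \<Longrightarrow> P y \<Longrightarrow> P (x + y)" and Ps: "\<And>c x. P x \<Longrightarrow> P (sL c x)"
    and PE: "\<And>e. e \<in> E \<Longrightarrow> P e"
  shows "P x"
proof -
  obtain c where c: "{e. c e \<noteq> 0} \<subseteq> E" "x = (\<Sum>e\<in>{e. c e \<noteq> 0}. sL (c e) e)"
    using basis_repr[of x] by blast
  show ?thesis unfolding c(2)
  proof (rule span_sum[OF P0 Padd Ps])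
    fix e assume "e \<in> {e. c e \<noteq> 0}" then show "P e" using c(1) PE by blast
  qed
qed

definition degE :: "'l \<Rightarrow> 'g" where "degE e = (THE g. e \<in> Lg g)"

lemma degE: assumes "e \<in> E" shows "e \<in> Lg (degE e)"
proof -
  obtain g where g: "e \<in> Lg g" using homog assms by blast
  have "(THE g. e \<in> Lg g) = g" using g Lg_unique E_nz[OF assms] by blast
  then show ?thesis using g by (simp add: degE_def)
qed

lemma degE_eq: assumes "e \<in> E" "e \<in> Lg g" shows "degE e = g"
  using Lg_unique[OF degE[OF assms(1)] assms(2) E_nz[OF assms(1)]] .

lemma coeff_deg:
  assumes x: "x \<in> Lg g" and fin: "finite {e. c e \<noteq> 0}" and sub: "{e. c e \<noteq> 0} \<subseteq> E"
    and xs: "x = (\<Sum>e\<in>{e. c e \<noteq> 0}. sL (c e) e)"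
    and ce: "c e \<noteq> 0"
  shows "e \<in> Lg g"
proof -
  define S where "S = {e. c e \<noteq> 0}"
  define y where "y k = (\<Sum>e\<in>{e. e \<in> S \<and> degE e = k}. sL (c e) e)" for k
  have yk: "y k \<in> Lg k" for k
    unfolding y_def by (rule span_sum[where P="\<lambda>z. z \<in> Lg k"]) (use Lg_closed degE sub S_def in auto)
  have y0: "y k = 0" if "k \<notin> degE ` S" for k
    using that unfolding y_def by (auto intro!: sum.neutral)
  have finS: "finite S" using fin S_def by simp
  have xy: "x = (\<Sum>k\<in>degE ` S. y k)"
    unfolding xs y_def S_def[symmetric] by (rule sum.image_gen[OF finS])
  have supp_y: "{k. y k \<noteq> 0} \<subseteq> degE ` S" using y0 by blast
  have fy: "finite {k. y k \<noteq> 0}" using supp_y finS by (meson finite_imageI finite_subset)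
  have xy2: "x = (\<Sum>k\<in>{k. y k \<noteq> 0}. y k)"
    unfolding xy by (rule sum.mono_neutral_right) (use finS supp_y in auto)
  define cc where "cc = (\<lambda>k. if k = g then x else 0)"
  have a: "(\<forall>k. cc k \<in> Lg k) \<and> finite {k. cc k \<noteq> 0} \<and> x = (\<Sum>k\<in>{k. cc k \<noteq> 0}. cc k)"
  proof (intro conjI)
    show "\<forall>k. cc k \<in> Lg k" using x Lg_closed by (simp add: cc_def)
    have "{k. cc k \<noteq> 0} \<subseteq> {g}" by (auto simp: cc_def)
    then show "finite {k. cc k \<noteq> 0}" by (rule finite_subset) simp
    show "x = (\<Sum>k\<in>{k. cc k \<noteq> 0}. cc k)"
    proof (cases "x = 0")
      case True
      then have "{k. cc k \<noteq> 0} = {}" by (auto simp: cc_def)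
      then show ?thesis using True by simp
    next
      case False
      then have "{k. cc k \<noteq> 0} = {g}" by (auto simp: cc_def)
      then show ?thesis by (simp add: cc_def)
    qed
  qed
  have b: "(\<forall>k. y k \<in> Lg k) \<and> finite {k. y k \<noteq> 0} \<and> x = (\<Sum>k\<in>{k. y k \<noteq> 0}. y k)"
    using yk fy xy2 by blast
  have ycc: "y = cc" using graded_repr[of x] a b by blast
  have yg: "y g = x" using ycc by (simp add: cc_def)
  define c' where "c' = (\<lambda>e. if degE e = g then c e else 0)"
  have sc': "{e. c' e \<noteq> 0} = {e. e \<in> S \<and> degE e = g}" by (auto simp: c'_def S_def)
  have a2: "finite {e. c e \<noteq> 0} \<and> {e. c e \<noteq> 0} \<subseteq> E \<and> x = (\<Sum>e\<in>{e. c e \<noteq> 0}. sL (c e) e)"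
    using fin sub xs by blast
  have b2: "finite {e. c' e \<noteq> 0} \<and> {e. c' e \<noteq> 0} \<subseteq> E \<and> x = (\<Sum>e\<in>{e. c' e \<noteq> 0}. sL (c' e) e)"
  proof (intro conjI)
    show "finite {e. c' e \<noteq> 0}" unfolding sc' using finS by simp
    show "{e. c' e \<noteq> 0} \<subseteq> E" unfolding sc' using sub S_def by auto
    have "(\<Sum>e\<in>{e. c' e \<noteq> 0}. sL (c' e) e) = y g"
      unfolding sc' y_def by (rule sum.cong) (auto simp: c'_def)
    then show "x = (\<Sum>e\<in>{e. c' e \<noteq> 0}. sL (c' e) e)" using yg by simp
  qed
  have "c = c'" using basis_repr[of x] a2 b2 by blast
  then have "c' e \<noteq> 0" using ce by simp
  then have "degE e = g" by (simp add: c'_def split: if_splits)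
  moreover have "e \<in> E" using ce sub by blast
  ultimately show ?thesis using degE by metis
qed

lemma span_g:
  assumes P0: "P 0" and Padd: "\<And>x y. P x \<Longrightarrow> P y \<Longrightarrow> P (x + y)" and Ps: "\<And>c x. P x \<Longrightarrow> P (sL c x)"
    and PE: "\<And>e. e \<in> E \<Longrightarrow> e \<in> Lg g \<Longrightarrow> P e"
    and x: "x \<in> Lg g"
  shows "P x"
proof -
  obtain c where c: "finite {e. c e \<noteq> 0}" "{e. c e \<noteq> 0} \<subseteq> E" "x = (\<Sum>e\<in>{e. c e \<noteq> 0}. sL (c e) e)"
    using basis_repr[of x] by blast
  show ?thesis unfolding c(3)
  proof (rule span_sum[OF P0 Padd Ps])
    fix e assume e: "e \<in> {e. c e \<noteq> 0}"
    then have "e \<in> E" using c(2) by blast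
    moreover have "e \<in> Lg g" using coeff_deg[OF x c] e by blast
    ultimately show "P e" using PE by blast
  qed
qed

end



context pbw begin

definition homogw :: "'g \<Rightarrow> ('b list \<Rightarrow> 'k) \<Rightarrow> bool" where
  "homogw k f \<longleftrightarrow> (\<forall>w\<in>supp f. word_deg d w = k)"

definition single :: "'g \<Rightarrow> ('b list \<Rightarrow> 'k) \<Rightarrow> bool" where
  "single k f \<longleftrightarrow> f \<in> FBstar B \<and> (\<forall>w\<in>supp f. length w = 1 \<and> word_deg d w = k)"

definition cs :: "'g \<Rightarrow> ('b list \<Rightarrow> 'k) \<Rightarrow> ('b list \<Rightarrow> 'k)" where
  "cs h f = (\<lambda>w. \<chi> h (word_deg d w) * f w)"

lemma homogw_0: "homogw k 0" by (simp add: homogw_def)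
lemma homogw_add: "homogw k f \<Longrightarrow> homogw k g \<Longrightarrow> homogw k (f + g)"
  unfolding homogw_def using supp_add[of f g] by blast
lemma homogw_fscale: "homogw k f \<Longrightarrow> homogw k (fscale c f)"
  unfolding homogw_def using supp_fscale[of c f] by blast
lemma homogw_sum: "(\<And>i. i \<in> S \<Longrightarrow> homogw k (F i)) \<Longrightarrow> homogw k (\<Sum>i\<in>S. F i)"
proof (induct S rule: infinite_finite_induct)
  case (infinite A) then show ?case by (metis homogw_0 sum.infinite)
next
  case empty then show ?case by (metis homogw_0 sum.empty)
next
  case (insert x S)
  have "homogw k (F x)" "homogw k (sum F S)" using insert by auto
  then have "homogw k (F x + sum F S)" by (rule homogw_add)
  then show ?case using insert(1,2) by (metis sum.insert)
qed
lemma homogw_wdelta: "homogw (word_deg d w) (wdelta w)"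
  by (simp add: homogw_def supp_wdelta)

lemma single_FP: "single k f \<Longrightarrow> f \<in> FP B prec"
  unfolding single_def FP_iff FBstar_iff by (auto intro!: Pwords_short)
lemma single_gr: "single k f \<Longrightarrow> f \<in> FBstar_gr B d k"
  unfolding single_def FBstar_gr_def by (auto simp: supp_def)

lemma phiL_in: "\<phi>L x \<in> FBstar B" using lin_onD(1)[OF phiL_lin] by simp
lemma phiL_add: "\<phi>L (x + y) = \<phi>L x + \<phi>L y" using lin_onD(2)[OF phiL_lin] by simp
lemma phiL_scale: "\<phi>L (sL c x) = fscale c (\<phi>L x)" using lin_onD(3)[OF phiL_lin] by simp
lemma phiL_zero: "\<phi>L 0 = 0" using lin_zero[OF phiL_lin modL module_FBstar] .
lemma phiL_eb: "b \<in> B \<Longrightarrow> \<phi>L (eb b) = wdelta [b]"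
  using phiL_E eb_E phi_eb by metis

lemma phiL_single: assumes "x \<in> Lg g" shows "single g (\<phi>L x)"
proof (rule span_g[where P="\<lambda>x. single g (\<phi>L x)", OF _ _ _ _ assms])
  show "single g (\<phi>L 0)" by (simp add: phiL_zero single_def FBstar_zero)
  show "single g (\<phi>L (x + y))" if "single g (\<phi>L x)" "single g (\<phi>L y)" for x y
    using that supp_add[of "\<phi>L x" "\<phi>L y"] unfolding phiL_add single_def
    by (auto intro: FBstar_add)
  show "single g (\<phi>L (sL c x))" if "single g (\<phi>L x)" for c x
    using that supp_fscale[of c "\<phi>L x"] unfolding phiL_scale single_def
    by (auto intro: FBstar_fscale)
  show "single g (\<phi>L e)" if "e \<in> E" "e \<in> Lg g" for e
    using that phiL_E phi_B d_phi by (auto simp: single_def supp_wdelta FBstar_wdelta)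
qed

lemma lam_in: "f \<in> FBstar B \<Longrightarrow> lam f \<in> FP B prec" using lin_onD(1)[OF lam_lin] .
lemma lam_add: "f \<in> FBstar B \<Longrightarrow> g \<in> FBstar B \<Longrightarrow> lam (f + g) = lam f + lam g"
  using lin_onD(2)[OF lam_lin] .
lemma lam_scale: "f \<in> FBstar B \<Longrightarrow> lam (fscale c f) = fscale c (lam f)"
  using lin_onD(3)[OF lam_lin] .
lemma lam_zero: "lam 0 = 0" using lin_zero[OF lam_lin module_FBstar module_FP] .
lemma lam_diff: "f \<in> FBstar B \<Longrightarrow> g \<in> FBstar B \<Longrightarrow> lam (f - g) = lam f - lam g"
  using lin_diff[OF lam_lin module_FBstar module_FP] .
lemma lam_sum: "(\<And>i. i \<in> S \<Longrightarrow> F i \<in> FBstar B) \<Longrightarrow> lam (\<Sum>i\<in>S. F i) = (\<Sum>i\<in>S. lam (F i))"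
  using lin_sum[OF lam_lin module_FBstar module_FP] .

lemma lam_expand: assumes "f \<in> FBstar B"
  shows "lam f = (\<Sum>w\<in>supp f. fscale (f w) (lam (wdelta w)))"
proof -
  have ws: "w \<in> supp f \<Longrightarrow> set w \<subseteq> B" for w using assms by (auto simp: FBstar_iff)
  have "lam f = lam (\<Sum>w\<in>supp f. fscale (f w) (wdelta w))" using expand[OF assms] by simp
  also have "\<dots> = (\<Sum>w\<in>supp f. lam (fscale (f w) (wdelta w)))"
    by (rule lam_sum) (simp add: FBstar_fscale FBstar_wdelta ws)
  also have "\<dots> = (\<Sum>w\<in>supp f. fscale (f w) (lam (wdelta w)))"
    by (rule sum.cong) (simp_all add: lam_scale FBstar_wdelta ws)
  finally show ?thesis .
qed

lemma lam_FP: assumes "f \<in> FP B prec" shows "lam f = f"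
proof -
  have fB: "f \<in> FBstar B" using assms FP_sub by blast
  have "lam f = (\<Sum>w\<in>supp f. fscale (f w) (lam (wdelta w)))" by (rule lam_expand[OF fB])
  also have "\<dots> = (\<Sum>w\<in>supp f. fscale (f w) (wdelta w))"
    by (rule sum.cong) (use assms lam_i in \<open>auto simp: FP_iff\<close>)
  also have "\<dots> = f" using expand[OF fB] by simp
  finally show ?thesis .
qed

lemma lam_idem: "f \<in> FBstar B \<Longrightarrow> lam (lam f) = lam f"
  using lam_FP lam_in by blast

lemma conc_mid: assumes "f \<in> FBstar B"
  shows "conc (conc (wdelta u) f) (wdelta v) = (\<Sum>w\<in>supp f. fscale (f w) (wdelta (u @ w @ v)))"
proof -
  have "conc (conc (wdelta u) f) (wdelta v)
      = conc (conc (wdelta u) (\<Sum>w\<in>supp f. fscale (f w) (wdelta w))) (wdelta v)"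
    using expand[OF assms] by simp
  also have "\<dots> = (\<Sum>w\<in>supp f. fscale (f w) (wdelta (u @ w @ v)))"
    by (simp add: conc_sum_left conc_sum_right conc_scale_left conc_scale_right conc_wdelta)
  finally show ?thesis .
qed

lemma lam_mid: assumes "f \<in> FBstar B" "set u \<subseteq> B" "set v \<subseteq> B"
  shows "lam (conc (conc (wdelta u) f) (wdelta v)) = (\<Sum>w\<in>supp f. fscale (f w) (lam (wdelta (u @ w @ v))))"
proof -
  have ws: "w \<in> supp f \<Longrightarrow> set (u @ w @ v) \<subseteq> B" for w using assms by (auto simp: FBstar_iff)
  have "lam (\<Sum>w\<in>supp f. fscale (f w) (wdelta (u @ w @ v))) = (\<Sum>w\<in>supp f. lam (fscale (f w) (wdelta (u @ w @ v))))"
    by (rule lam_sum) (rule FBstar_fscale[OF FBstar_wdelta[OF ws]])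
  also have "\<dots> = (\<Sum>w\<in>supp f. fscale (f w) (lam (wdelta (u @ w @ v))))"
    by (rule sum.cong[OF refl]) (rule lam_scale[OF FBstar_wdelta[OF ws]])
  finally show ?thesis unfolding conc_mid[OF assms(1)] .
qed

lemma lam_ii': assumes "set u \<subseteq> B" "set v \<subseteq> B" "b \<in> B" "c \<in> B"
  shows "lam (wdelta (u @ b # c # v)) =
          fscale (\<chi> (d b) (d c)) (lam (wdelta (u @ c # b # v)))
          + lam (conc (conc (wdelta u) (\<phi>L (br (eb b) (eb c)))) (wdelta v))"
  using lam_ii assms by blast

lemma lam_homog_word: assumes "set w \<subseteq> B" shows "homogw (word_deg d w) (lam (wdelta w))"
  using order _ _ assms
proof (rule reduce_induct[where Q="\<lambda>w. homogw (word_deg d w) (lam (wdelta w))"])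
  fix w assume "w \<in> Pwords B prec"
  then show "homogw (word_deg d w) (lam (wdelta w))" using lam_i homogw_wdelta by metis
next
  fix u b c v
  assume B: "set u \<subseteq> B" "set v \<subseteq> B" "b \<in> B" "c \<in> B"
    and Q1: "homogw (word_deg d (u @ c # b # v)) (lam (wdelta (u @ c # b # v)))"
    and Q2: "\<And>w'. set w' \<subseteq> B \<Longrightarrow> length w' < Suc (Suc (length u + length v)) \<Longrightarrow>
              homogw (word_deg d w') (lam (wdelta w'))"
  have cb: "d c + d b = d b + d c" using d_central[OF B(3)] unfolding central_def by simp
  have deq: "word_deg d (u @ c # b # v) = word_deg d (u @ b # c # v)"
    by (simp add: add.assoc[symmetric] cb)
  define f where "f = \<phi>L (br (eb b) (eb c))"
  have sf: "single (d b + d c) f" unfolding f_def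
    by (rule phiL_single[OF br_grade[OF eb_deg[OF B(3)] eb_deg[OF B(4)]]])
  have fB: "f \<in> FBstar B" using sf single_def by blast
  have "homogw (word_deg d (u @ b # c # v)) (lam (conc (conc (wdelta u) f) (wdelta v)))"
    unfolding lam_mid[OF fB B(1,2)]
  proof (rule homogw_sum, rule homogw_fscale)
    fix w assume w: "w \<in> supp f"
    then have lw: "length w = 1" and dw: "word_deg d w = d b + d c" using sf single_def by auto
    have sw: "set w \<subseteq> B" using fB w by (auto simp: FBstar_iff)
    have "homogw (word_deg d (u @ w @ v)) (lam (wdelta (u @ w @ v)))"
      by (rule Q2) (use B sw lw in auto)
    moreover have "word_deg d (u @ w @ v) = word_deg d (u @ b # c # v)"
      using dw by (simp add: add.assoc)
    ultimately show "homogw (word_deg d (u @ b # c # v)) (lam (wdelta (u @ w @ v)))" by simp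
  qed
  then show "homogw (word_deg d (u @ b # c # v)) (lam (wdelta (u @ b # c # v)))"
    unfolding lam_ii'[OF B] f_def[symmetric]
    by (intro homogw_add homogw_fscale) (use Q1 deq in simp_all)
qed

lemma lam_homog: assumes "f \<in> FBstar B" "homogw k f" shows "homogw k (lam f)"
  unfolding lam_expand[OF assms(1)]
proof (rule homogw_sum, rule homogw_fscale)
  fix w assume w: "w \<in> supp f"
  then have "set w \<subseteq> B" "word_deg d w = k" using assms by (auto simp: FBstar_iff homogw_def)
  then show "homogw k (lam (wdelta w))" using lam_homog_word by metis
qed

section \<open>Character scaling\<close>

lemma cs_apply: "cs h f w = \<chi> h (word_deg d w) * f w" by (simp add: cs_def)
lemma cs_add: "cs h (f + g) = cs h f + cs h g" by (rule ext) (simp add: cs_def algebra_simps)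
lemma cs_fscale: "cs h (fscale c f) = fscale c (cs h f)" by (rule ext) (simp add: cs_def algebra_simps)
lemma cs_zero: "cs h 0 = 0" by (rule ext) (simp add: cs_def)
lemma cs_sum: "cs h (\<Sum>i\<in>S. F i) = (\<Sum>i\<in>S. cs h (F i))"
  by (rule ext) (simp add: cs_def sum_fun_apply sum_distrib_left)
lemma cs_wdelta: "cs h (wdelta w) = fscale (\<chi> h (word_deg d w)) (wdelta w)"
  by (rule ext) (simp add: cs_def wdelta_apply)
lemma cs_homog: "homogw k f \<Longrightarrow> cs h f = fscale (\<chi> h k) f"
  by (rule ext) (auto simp: cs_def homogw_def supp_def)
lemma supp_cs: "supp (cs h f) = supp f"
  by (auto simp: supp_def cs_def chi_nz)
lemma cs_FBstar: "f \<in> FBstar B \<Longrightarrow> cs h f \<in> FBstar B"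
  by (simp add: FBstar_iff supp_cs)
lemma cs_FP: "f \<in> FP B prec \<Longrightarrow> cs h f \<in> FP B prec"
  by (simp add: FP_iff supp_cs)
lemma cs_0: "cs 0 f = f" by (rule ext) (simp add: cs_def chi_add)
lemma cs_plus: "cs (g + h) f = cs g (cs h f)" by (rule ext) (simp add: cs_def chi_add)

lemma cs_conc: "conc (cs h f) (cs h g) = cs h (conc f g)"
proof (rule ext)
  fix w :: "'b list"
  show "conc (cs h f) (cs h g) w = cs h (conc f g) w"
    unfolding conc_def cs_def sum_distrib_left
  proof (rule sum.cong[OF refl])
    fix i
    have "word_deg d w = word_deg d (take i w) + word_deg d (drop i w)"
      by (metis append_take_drop_id word_deg_append)
    then show "\<chi> h (word_deg d (take i w)) * f (take i w) * (\<chi> h (word_deg d (drop i w)) * g (drop i w)) =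
          \<chi> h (word_deg d w) * (f (take i w) * g (drop i w))"
      by (simp add: chi_add)
  qed
qed

lemma lam_cs: assumes "f \<in> FBstar B" shows "lam (cs h f) = cs h (lam f)"
proof -
  have ws: "w \<in> supp f \<Longrightarrow> set w \<subseteq> B" for w using assms by (auto simp: FBstar_iff)
  have "cs h f = (\<Sum>w\<in>supp f. fscale (f w) (fscale (\<chi> h (word_deg d w)) (wdelta w)))"
    by (subst expand[OF assms]) (simp add: cs_sum cs_fscale cs_wdelta)
  then have "lam (cs h f) = (\<Sum>w\<in>supp f. fscale (f w) (fscale (\<chi> h (word_deg d w)) (lam (wdelta w))))"
    by (simp, subst lam_sum) (auto intro!: sum.cong simp: lam_scale FBstar_fscale FBstar_wdelta ws)
  also have "\<dots> = cs h (lam f)"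
    unfolding lam_expand[OF assms] cs_sum cs_fscale
    by (rule sum.cong[OF refl]) (simp add: cs_homog[OF lam_homog_word] ws)
  finally show ?thesis .
qed

end



context pbw begin

abbreviation U :: "('b list \<Rightarrow> 'k) set" where "U \<equiv> FP B prec"
abbreviation Ug :: "'g \<Rightarrow> ('b list \<Rightarrow> 'k) set" where "Ug \<equiv> (\<lambda>g. FBstar_gr B (letter_deg Lg E \<phi>) g \<inter> FP B prec)"
abbreviation "aL \<equiv> (\<lambda>g b. \<phi>L (actL g (inv_into E \<phi> b)))"
abbreviation "actU \<equiv> act_FBstar aL"
abbreviation "multU \<equiv> (\<lambda>u v. lam (conc u v))"

lemma gr_iff: "f \<in> FBstar_gr B d k \<longleftrightarrow> f \<in> FBstar B \<and> homogw k f"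
  by (auto simp: FBstar_gr_def homogw_def supp_def)

lemma Ug_iff: "f \<in> Ug k \<longleftrightarrow> f \<in> FP B prec \<and> homogw k f"
  using FP_sub gr_iff by blast

lemma aL_eq: assumes "b \<in> B" shows "aL h b = fscale (\<chi> h (d b)) (wdelta [b])"
proof -
  have "actL h (eb b) = sL (\<chi> h (d b)) (eb b)" by (rule actL_E[OF eb_deg[OF assms]])
  then show ?thesis by (simp add: phiL_scale phiL_eb[OF assms])
qed

lemma act_word_eq: "set w \<subseteq> B \<Longrightarrow> act_word aL h w = fscale (\<chi> h (word_deg d w)) (wdelta w)"
proof (induct w)
  case Nil then show ?case by (simp add: chi_add)
next
  case (Cons b w)
  have "act_word aL h (b # w) = conc (aL h b) (act_word aL h w)" by simp
  also have "\<dots> = conc (fscale (\<chi> h (d b)) (wdelta [b])) (fscale (\<chi> h (word_deg d w)) (wdelta w))"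
    using Cons by (simp only: aL_eq set_simps insert_subset)
  also have "\<dots> = fscale (\<chi> h (word_deg d (b # w))) (wdelta (b # w))"
    by (simp del: fscale_apply add: conc_scale_left conc_scale_right conc_wdelta fscale_fscale chi_add mult.commute)
  finally show ?case .
qed

lemma actU_cs: assumes "f \<in> FBstar B" shows "actU h f = cs h f"
proof -
  have ws: "w \<in> supp f \<Longrightarrow> set w \<subseteq> B" for w using assms by (auto simp: FBstar_iff)
  have "actU h f = (\<Sum>w\<in>supp f. fscale (f w) (act_word aL h w))"
    by (simp add: act_FBstar_def supp_def)
  also have "\<dots> = (\<Sum>w\<in>supp f. fscale (f w) (cs h (wdelta w)))"
    by (rule sum.cong[OF refl]) (simp add: act_word_eq ws cs_wdelta)
  also have "\<dots> = cs h f"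
    by (subst (2) expand[OF assms]) (simp add: cs_sum cs_fscale)
  finally show ?thesis .
qed

lemma homogw_conc: "homogw g x \<Longrightarrow> homogw h y \<Longrightarrow> homogw (g + h) (conc x y)"
proof -
  assume a: "homogw g x" "homogw h y"
  show ?thesis unfolding homogw_def
  proof
    fix w assume "w \<in> supp (conc x y)"
    then have "w \<in> (\<lambda>(u,v). u @ v) ` (supp x \<times> supp y)" by (rule subsetD[OF supp_conc])
    then obtain p where p: "p \<in> supp x \<times> supp y" "w = (\<lambda>(u,v). u @ v) p" by (rule imageE)
    obtain u v where uv: "p = (u, v)" by (cases p)
    have "u \<in> supp x" "v \<in> supp y" "w = u @ v" using p uv by auto
    then show "word_deg d w = g + h" using a by (simp add: homogw_def)
  qed
qed

lemma central_homog: assumes "f \<in> FBstar B" "homogw g f" "f \<noteq> 0" shows "central g"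
proof -
  obtain w where w: "w \<in> supp f" using assms(3) by (auto simp: supp_def fun_eq_iff)
  then have "set w \<subseteq> B" "word_deg d w = g" using assms by (auto simp: FBstar_iff homogw_def)
  then show ?thesis using central_word_deg[of w d] d_central by blast
qed

definition part :: "'g \<Rightarrow> ('b list \<Rightarrow> 'k) \<Rightarrow> ('b list \<Rightarrow> 'k)" where
  "part g x = (\<lambda>w. if word_deg d w = g then x w else 0)"

lemma graded_U: "graded_on U fscale Ug"
  unfolding graded_on_def
proof (intro conjI allI ballI)
  fix g
  show "Ug g \<subseteq> U" by blast
  show "0 \<in> Ug g" unfolding Ug_iff by (simp add: FP_zero homogw_0)
  show "x + y \<in> Ug g" if "x \<in> Ug g" "y \<in> Ug g" for x y using that unfolding Ug_iff by (simp add: FP_add homogw_add)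
  show "fscale c x \<in> Ug g" if "x \<in> Ug g" for c x using that unfolding Ug_iff by (simp add: FP_fscale homogw_fscale)
next
  fix x assume x: "x \<in> U"
  have fx: "finite (supp x)" using x by (simp add: FP_iff)
  have partU: "part g x \<in> Ug g" for g
  proof -
    have "supp (part g x) \<subseteq> supp x" by (auto simp: supp_def part_def)
    then have "part g x \<in> U" using x FP_supp2[of x B prec x "part g x"] by blast
    moreover have "homogw g (part g x)" by (auto simp: homogw_def supp_def part_def)
    ultimately show ?thesis unfolding Ug_iff by simp
  qed
  have psub: "{g. part g x \<noteq> 0} \<subseteq> word_deg d ` supp x"
  proof
    fix g assume "g \<in> {g. part g x \<noteq> 0}"
    then obtain w where "part g x w \<noteq> 0" by (auto simp: fun_eq_iff)
    then show "g \<in> word_deg d ` supp x" by (auto simp: part_def supp_def split: if_splits)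
  qed
  have pfin: "finite {g. part g x \<noteq> 0}" using psub fx by (meson finite_imageI finite_subset)
  show "\<exists>!c. (\<forall>g. c g \<in> Ug g) \<and> finite {g. c g \<noteq> 0} \<and> x = (\<Sum>g\<in>{g. c g \<noteq> 0}. c g)"
  proof (rule ex1I[where a="\<lambda>g. part g x"])
    show "(\<forall>g. part g x \<in> Ug g) \<and> finite {g. part g x \<noteq> 0} \<and> x = (\<Sum>g\<in>{g. part g x \<noteq> 0}. part g x)"
    proof (intro conjI allI)
      show "part g x \<in> Ug g" for g by (rule partU)
      show "finite {g. part g x \<noteq> 0}" by (rule pfin)
      show "x = (\<Sum>g\<in>{g. part g x \<noteq> 0}. part g x)"
      proof (rule ext)
        fix w
        have "(\<Sum>g\<in>{g. part g x \<noteq> 0}. part g x) w = (\<Sum>g\<in>{g. part g x \<noteq> 0}. if word_deg d w = g then x w else 0)"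
          unfolding sum_fun_apply by (simp add: part_def)
        also have "\<dots> = (if word_deg d w \<in> {g. part g x \<noteq> 0} then x w else 0)"
          by (simp add: sum.delta[OF pfin] eq_commute[of "word_deg d w"] cong: if_cong)
        also have "\<dots> = x w"
          by (auto simp: part_def fun_eq_iff)
        finally show "x w = (\<Sum>g\<in>{g. part g x \<noteq> 0}. part g x) w" by simp
      qed
    qed
  next
    fix c assume c: "(\<forall>g. c g \<in> Ug g) \<and> finite {g. c g \<noteq> 0} \<and> x = (\<Sum>g\<in>{g. c g \<noteq> 0}. c g)"
    show "c = (\<lambda>g. part g x)"
    proof (intro ext)
      fix g w
      have hc: "c g' w = 0" if "g' \<noteq> word_deg d w" for g'
      proof -
        have "homogw g' (c g')" using c Ug_iff by blast
        then show ?thesis using that by (auto simp: homogw_def supp_def)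
      qed
      have "x w = (\<Sum>g'\<in>{g. c g \<noteq> 0}. c g' w)" using c by (metis sum_fun_apply)
      also have "\<dots> = (\<Sum>g'\<in>{g. c g \<noteq> 0}. if g' = word_deg d w then c g' w else 0)"
        by (rule sum.cong[OF refl]) (use hc in auto)
      also have "\<dots> = c (word_deg d w) w"
        using c by (auto simp: sum.delta')
      finally have xw: "x w = c (word_deg d w) w" .
      show "c g w = part g x w"
        using hc[of g] xw by (auto simp: part_def)
    qed
  qed
qed

end



context pbw begin

lemma U_FB: "x \<in> U \<Longrightarrow> x \<in> FBstar B" using FP_sub by blast

lemma one_U: "wdelta [] \<in> U" by (rule FP_wdelta) (simp add: Pwords_def)

lemma multU_U: "x \<in> U \<Longrightarrow> y \<in> U \<Longrightarrow> multU x y \<in> U"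
  by (intro lam_in FBstar_conc U_FB)

lemma alg_U: "yd_algebra U fscale Ug actU multU (wdelta [])"
  unfolding yd_algebra_def yd_module_def
proof (intro conjI allI ballI)
  show "module_on U fscale" by (rule module_FP)
  show "graded_on U fscale Ug" by (rule graded_U)
  show "lin_on U fscale U fscale (actU g)" for g
    unfolding lin_on_def
    by (auto simp: actU_cs U_FB cs_FP cs_add cs_fscale FP_add FP_fscale)
  show "actU 0 x = x" if "x \<in> U" for x using that by (simp add: actU_cs U_FB cs_0)
  show "actU (g + h) x = actU g (actU h x)" if "x \<in> U" for g h x
    using that by (simp add: actU_cs U_FB cs_plus cs_FBstar)
  show "actU h x \<in> Ug (h + g + - h)" if x: "x \<in> Ug g" for h g x
  proof (cases "x = 0")
    case True
    then show ?thesis unfolding Ug_iff by (simp add: actU_cs FBstar_zero cs_zero FP_zero homogw_0)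
  next
    case False
    have xx: "x \<in> U" "homogw g x" using x Ug_iff by blast+
    have "central g" using central_homog[OF U_FB[OF xx(1)] xx(2) False] .
    then have hg: "h + g + - h = g" by (rule central_conj)
    have "cs h x \<in> U" using cs_FP xx(1) by blast
    moreover have "homogw g (cs h x)" using xx(2) by (simp add: homogw_def supp_cs)
    ultimately show ?thesis unfolding hg Ug_iff actU_cs[OF U_FB[OF xx(1)]] by simp
  qed
  show "wdelta [] \<in> U" by (rule one_U)
  show "multU x y \<in> U" if "x \<in> U" "y \<in> U" for x y using that by (rule multU_U)
  show "multU (x + y) z = multU x z + multU y z" if "x \<in> U" "y \<in> U" "z \<in> U" for x y z
    using that by (simp add: conc_add_left lam_add FBstar_conc U_FB)
  show "multU x (y + z) = multU x y + multU x z" if "x \<in> U" "y \<in> U" "z \<in> U" for x y z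
    using that by (simp add: conc_add_right lam_add FBstar_conc U_FB)
  show "multU (fscale c x) y = fscale c (multU x y)" if "x \<in> U" "y \<in> U" for c x y
    using that by (simp del: fscale_apply add: conc_scale_left lam_scale FBstar_conc U_FB)
  show "multU x (fscale c y) = fscale c (multU x y)" if "x \<in> U" "y \<in> U" for c x y
    using that by (simp del: fscale_apply add: conc_scale_right lam_scale FBstar_conc U_FB)
  show "multU (multU x y) z = multU x (multU y z)" if "x \<in> U" "y \<in> U" "z \<in> U" for x y z
  proof -
    have xyz: "x \<in> FBstar B" "y \<in> FBstar B" "z \<in> FBstar B" using that U_FB by auto
    have "lam (conc (lam (conc x y)) z) = lam (conc (conc x y) z)"
      using lam_iii FBstar_conc[OF xyz(1,2)] xyz(3) by metis
    also have "\<dots> = lam (conc x (conc y z))" by (simp add: conc_assoc)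
    also have "\<dots> = lam (conc x (lam (conc y z)))"
      using lam_iii FBstar_conc[OF xyz(2,3)] xyz(1) by metis
    finally show ?thesis .
  qed
  show "multU (wdelta []) x = x" "multU x (wdelta []) = x" if "x \<in> U" for x
    using that by (simp_all add: lam_FP)
  show "multU x y \<in> Ug (g + h)" if "x \<in> Ug g" "y \<in> Ug h" for g h x y
  proof -
    have xy: "x \<in> U" "homogw g x" "y \<in> U" "homogw h y" using that Ug_iff by blast+
    have "homogw (g + h) (lam (conc x y))"
      by (rule lam_homog[OF FBstar_conc[OF U_FB U_FB] homogw_conc]) (use xy in auto)
    then show ?thesis unfolding Ug_iff using multU_U xy by blast
  qed
  show "wdelta [] \<in> Ug 0" unfolding Ug_iff using one_U by (simp add: homogw_def supp_wdelta)
  show "actU h (multU x y) = multU (actU h x) (actU h y)" if "x \<in> U" "y \<in> U" for h x y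
  proof -
    have xy: "x \<in> FBstar B" "y \<in> FBstar B" using that U_FB by auto
    have "actU h (multU x y) = cs h (lam (conc x y))"
      using actU_cs U_FB multU_U that by blast
    also have "\<dots> = lam (cs h (conc x y))" using lam_cs FBstar_conc[OF xy] by metis
    also have "\<dots> = multU (cs h x) (cs h y)" by (simp add: cs_conc)
    finally show ?thesis using actU_cs xy by simp
  qed
  show "actU h (wdelta []) = wdelta []" for h
    using actU_cs[OF U_FB[OF one_U]] by (simp add: cs_wdelta chi_add)
qed

end



context pbw begin

lemma bilin_ext:
  fixes F G :: "'l \<Rightarrow> 'l \<Rightarrow> ('b list \<Rightarrow> 'k)"
  assumes F1: "\<And>x1 x2 y. F (x1 + x2) y = F x1 y + F x2 y" and F2: "\<And>x y1 y2. F x (y1 + y2) = F x y1 + F x y2"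
    and F3: "\<And>c x y. F (sL c x) y = fscale c (F x y)" and F4: "\<And>c x y. F x (sL c y) = fscale c (F x y)"
    and G1: "\<And>x1 x2 y. G (x1 + x2) y = G x1 y + G x2 y" and G2: "\<And>x y1 y2. G x (y1 + y2) = G x y1 + G x y2"
    and G3: "\<And>c x y. G (sL c x) y = fscale c (G x y)" and G4: "\<And>c x y. G x (sL c y) = fscale c (G x y)"
    and base: "\<And>e f. e \<in> E \<Longrightarrow> e \<in> Lg g \<Longrightarrow> f \<in> E \<Longrightarrow> f \<in> Lg h \<Longrightarrow> F e f = G e f"
    and x: "x \<in> Lg g" and y: "y \<in> Lg h"
  shows "F x y = G x y"
proof -
  have F0: "F 0 y = 0" "F x 0 = 0" for x y
    using F3[of 0 0 y] F4[of x 0 0] by (simp_all add: sL_zero)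
  have G0: "G 0 y = 0" "G x 0 = 0" for x y
    using G3[of 0 0 y] G4[of x 0 0] by (simp_all add: sL_zero)
  have "\<forall>y\<in>Lg h. F x y = G x y"
  proof (rule span_g[where P="\<lambda>x. \<forall>y\<in>Lg h. F x y = G x y", OF _ _ _ _ x])
    show "\<forall>y\<in>Lg h. F 0 y = G 0 y" using F0 G0 by simp
    show "\<forall>y\<in>Lg h. F (x + x') y = G (x + x') y" if "\<forall>y\<in>Lg h. F x y = G x y" "\<forall>y\<in>Lg h. F x' y = G x' y" for x x'
      using that F1 G1 by simp
    show "\<forall>y\<in>Lg h. F (sL c x) y = G (sL c x) y" if "\<forall>y\<in>Lg h. F x y = G x y" for c x
      using that F3 G3 by simp
    show "\<forall>y\<in>Lg h. F e y = G e y" if e: "e \<in> E" "e \<in> Lg g" for e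
    proof
      fix y assume y: "y \<in> Lg h"
      show "F e y = G e y"
      proof (rule span_g[where P="\<lambda>y. F e y = G e y", OF _ _ _ _ y])
        show "F e 0 = G e 0" using F0 G0 by simp
        show "F e (y + y') = G e (y + y')" if "F e y = G e y" "F e y' = G e y'" for y y'
          using that F2 G2 by simp
        show "F e (sL c y) = G e (sL c y)" if "F e y = G e y" for c y
          using that F4 G4 by simp
        show "F e f = G e f" if "f \<in> E" "f \<in> Lg h" for f using base e that by blast
      qed
    qed
  qed
  then show ?thesis using y by blast
qed

definition M :: "'l \<Rightarrow> 'l \<Rightarrow> ('b list \<Rightarrow> 'k)" where
  "M x y = lam (conc (\<phi>L x) (\<phi>L y))"

lemma M_add1: "M (x1 + x2) y = M x1 y + M x2 y"
  by (simp add: M_def phiL_add conc_add_left lam_add FBstar_conc phiL_in)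
lemma M_add2: "M x (y1 + y2) = M x y1 + M x y2"
  by (simp add: M_def phiL_add conc_add_right lam_add FBstar_conc phiL_in)
lemma M_sc1: "M (sL c x) y = fscale c (M x y)"
  by (simp del: fscale_apply add: M_def phiL_scale conc_scale_left lam_scale FBstar_conc phiL_in)
lemma M_sc2: "M x (sL c y) = fscale c (M x y)"
  by (simp del: fscale_apply add: M_def phiL_scale conc_scale_right lam_scale FBstar_conc phiL_in)

lemma phiL_U: "\<phi>L x \<in> U"
proof (rule span_all[where P="\<lambda>x. \<phi>L x \<in> U"])
  show "\<phi>L 0 \<in> U" by (simp add: phiL_zero FP_zero)
  show "\<phi>L (x + y) \<in> U" if "\<phi>L x \<in> U" "\<phi>L y \<in> U" for x y using that by (simp add: phiL_add FP_add)
  show "\<phi>L (sL c x) \<in> U" if "\<phi>L x \<in> U" for c x using that by (simp add: phiL_scale FP_fscale)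
  show "\<phi>L e \<in> U" if "e \<in> E" for e using that phiL_E phi_B by (simp add: FP_wdelta Pwords_short)
qed

lemma actL_add: "actL h (x + y) = actL h x + actL h y" using lin_onD(2)[OF actL_lin] by simp
lemma actL_scale: "actL h (sL c x) = sL c (actL h x)" using lin_onD(3)[OF actL_lin] by simp
lemma actL_zero: "actL h 0 = 0" using lin_zero[OF actL_lin modL modL] .

lemma phiL_equiv: "\<phi>L (actL h x) = actU h (\<phi>L x)"
proof (rule span_all[where P="\<lambda>x. \<phi>L (actL h x) = actU h (\<phi>L x)"])
  show "\<phi>L (actL h 0) = actU h (\<phi>L 0)"
    by (simp add: actL_zero phiL_zero actU_cs FBstar_zero cs_zero)
  show "\<phi>L (actL h (x + y)) = actU h (\<phi>L (x + y))"
    if "\<phi>L (actL h x) = actU h (\<phi>L x)" "\<phi>L (actL h y) = actU h (\<phi>L y)" for x y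
    using that by (simp add: actL_add phiL_add actU_cs phiL_in cs_add FBstar_add)
  show "\<phi>L (actL h (sL c x)) = actU h (\<phi>L (sL c x))"
    if "\<phi>L (actL h x) = actU h (\<phi>L x)" for c x
    using that by (simp del: fscale_apply add: actL_scale phiL_scale actU_cs phiL_in cs_fscale FBstar_fscale)
  show "\<phi>L (actL h e) = actU h (\<phi>L e)" if e: "e \<in> E" for e
  proof -
    have ed: "e \<in> Lg (degE e)" by (rule degE[OF e])
    have "\<phi>L (actL h e) = fscale (\<chi> h (degE e)) (wdelta [\<phi> e])"
      using actL_E[OF ed] phiL_scale phiL_E e by simp
    moreover have "actU h (\<phi>L e) = fscale (\<chi> h (degE e)) (wdelta [\<phi> e])"
      using e phiL_E actU_cs[OF FBstar_wdelta[of "[\<phi> e]" B]] phi_B cs_wdelta d_phi[OF e ed] by (simp del: fscale_apply)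
    ultimately show ?thesis by simp
  qed
qed

lemma lie_U: "lie_hom_minus \<chi> UNIV sL Lg actL br U fscale Ug actU multU \<phi>L"
  unfolding lie_hom_minus_def yd_morphism_def
proof (intro conjI allI ballI)
  show "lin_on UNIV sL U fscale \<phi>L"
    unfolding lin_on_def by (simp add: phiL_U phiL_add phiL_scale)
  show "\<phi>L x \<in> Ug g" if "x \<in> Lg g" for g x
    using phiL_single[OF that] single_FP single_gr by blast
  show "\<phi>L (actL g x) = actU g (\<phi>L x)" for g x by (rule phiL_equiv)
  fix g h x y assume x: "x \<in> Lg g" and y: "y \<in> Lg h"
  show "\<phi>L (br x y) = multU (\<phi>L x) (\<phi>L y) - fscale (\<chi> g h) (multU (\<phi>L y) (\<phi>L x))"
    unfolding M_def[symmetric]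
  proof (rule bilin_ext[where F="\<lambda>x y. \<phi>L (br x y)" and G="\<lambda>x y. M x y - fscale (\<chi> g h) (M y x)", OF _ _ _ _ _ _ _ _ _ x y])
    show "\<phi>L (br (x1 + x2) y) = \<phi>L (br x1 y) + \<phi>L (br x2 y)" for x1 x2 y by (simp add: br_add phiL_add)
    show "\<phi>L (br x (y1 + y2)) = \<phi>L (br x y1) + \<phi>L (br x y2)" for x y1 y2 by (simp add: br_add phiL_add)
    show "\<phi>L (br (sL c x) y) = fscale c (\<phi>L (br x y))" for c x y by (simp del: fscale_apply add: br_scale phiL_scale)
    show "\<phi>L (br x (sL c y)) = fscale c (\<phi>L (br x y))" for c x y by (simp del: fscale_apply add: br_scale phiL_scale)
    show "M (x1 + x2) y - fscale (\<chi> g h) (M y (x1 + x2)) =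
          (M x1 y - fscale (\<chi> g h) (M y x1)) + (M x2 y - fscale (\<chi> g h) (M y x2))" for x1 x2 y
      by (simp del: fscale_apply add: M_add1 M_add2 fscale_add)
    show "M x (y1 + y2) - fscale (\<chi> g h) (M (y1 + y2) x) =
          (M x y1 - fscale (\<chi> g h) (M y1 x)) + (M x y2 - fscale (\<chi> g h) (M y2 x))" for x y1 y2
      by (simp del: fscale_apply add: M_add1 M_add2 fscale_add)
    show "M (sL c x) y - fscale (\<chi> g h) (M y (sL c x)) = fscale c (M x y - fscale (\<chi> g h) (M y x))" for c x y
      by (simp del: fscale_apply add: M_sc1 M_sc2 fscale_diff fscale_fscale mult.commute)
    show "M x (sL c y) - fscale (\<chi> g h) (M (sL c y) x) = fscale c (M x y - fscale (\<chi> g h) (M y x))" for c x y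
      by (simp del: fscale_apply add: M_sc1 M_sc2 fscale_diff fscale_fscale mult.commute)
    fix e f assume e: "e \<in> E" "e \<in> Lg g" and f: "f \<in> E" "f \<in> Lg h"
    define b where "b = \<phi> e"
    define c where "c = \<phi> f"
    have bc: "b \<in> B" "c \<in> B" "eb b = e" "eb c = f" "d b = g" "d c = h"
      using e f phi_B eb_phi d_phi by (auto simp: b_def c_def)
    have "lam (wdelta [b, c]) = fscale (\<chi> g h) (lam (wdelta [c, b])) + lam (\<phi>L (br e f))"
      using lam_ii'[of "[]" "[]" b c] bc by simp
    also have "lam (\<phi>L (br e f)) = \<phi>L (br e f)" by (rule lam_FP[OF phiL_U])
    finally have eq: "lam (wdelta [b, c]) = fscale (\<chi> g h) (lam (wdelta [c, b])) + \<phi>L (br e f)" .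
    have "M e f = lam (wdelta [b, c])" "M f e = lam (wdelta [c, b])"
      using e f phiL_E by (simp_all add: M_def b_def c_def conc_wdelta)
    then show "\<phi>L (br e f) = M e f - fscale (\<chi> g h) (M f e)" using eq by simp
  qed
qed

end



locale pbw_univ = pbw \<chi> sL Lg actL br A sA Ag actA multA oneA \<phi>A E B \<phi> \<phi>L prec lam
  for \<chi> :: "'g::group_add \<Rightarrow> 'g \<Rightarrow> 'k::field"
    and sL :: "'k \<Rightarrow> 'l::ab_group_add \<Rightarrow> 'l" and Lg :: "'g \<Rightarrow> 'l set"
    and actL :: "'g \<Rightarrow> 'l \<Rightarrow> 'l" and br :: "'l \<Rightarrow> 'l \<Rightarrow> 'l"
    and A :: "'a::ab_group_add set" and sA :: "'k \<Rightarrow> 'a \<Rightarrow> 'a" and Ag :: "'g \<Rightarrow> 'a set"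
    and actA :: "'g \<Rightarrow> 'a \<Rightarrow> 'a" and multA :: "'a \<Rightarrow> 'a \<Rightarrow> 'a" and oneA :: 'a
    and \<phi>A :: "'l \<Rightarrow> 'a"
    and E :: "'l set" and B :: "'b set" and \<phi> :: "'l \<Rightarrow> 'b"
    and \<phi>L :: "'l \<Rightarrow> ('b list \<Rightarrow> 'k)"
    and prec :: "'b \<Rightarrow> 'b \<Rightarrow> bool"
    and lam :: "('b list \<Rightarrow> 'k) \<Rightarrow> ('b list \<Rightarrow> 'k)" +
  fixes W :: "'w::ab_group_add set" and sW :: "'k \<Rightarrow> 'w \<Rightarrow> 'w" and Wg :: "'g \<Rightarrow> 'w set"
    and actW :: "'g \<Rightarrow> 'w \<Rightarrow> 'w" and multW :: "'w \<Rightarrow> 'w \<Rightarrow> 'w" and oneW :: 'w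
    and \<psi> :: "'l \<Rightarrow> 'w"
  assumes algW: "yd_algebra W sW Wg actW multW oneW"
    and lieW: "lie_hom_minus \<chi> UNIV sL Lg actL br W sW Wg actW multW \<psi>"
begin

lemma modW: "module_on W sW" using algW by (simp add: yd_algebra_def yd_module_def)
lemma gradedW: "graded_on W sW Wg" using algW by (simp add: yd_algebra_def yd_module_def)
lemma actW_lin: "lin_on W sW W sW (actW h)" using algW by (simp add: yd_algebra_def yd_module_def)
lemma Wg_closed: "0 \<in> Wg g" "x \<in> Wg g \<Longrightarrow> y \<in> Wg g \<Longrightarrow> x + y \<in> Wg g" "x \<in> Wg g \<Longrightarrow> sW c x \<in> Wg g"
  using gradedW unfolding graded_on_def by blast+

lemma oneW: "oneW \<in> W" using algW by (simp add: yd_algebra_def)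
lemma multW_in: "x \<in> W \<Longrightarrow> y \<in> W \<Longrightarrow> multW x y \<in> W" using algW by (simp add: yd_algebra_def)
lemma multW_add: "x \<in> W \<Longrightarrow> y \<in> W \<Longrightarrow> z \<in> W \<Longrightarrow> multW (x + y) z = multW x z + multW y z"
    "x \<in> W \<Longrightarrow> y \<in> W \<Longrightarrow> z \<in> W \<Longrightarrow> multW x (y + z) = multW x y + multW x z"
  using algW unfolding yd_algebra_def by blast+
lemma multW_sc: "x \<in> W \<Longrightarrow> y \<in> W \<Longrightarrow> multW (sW c x) y = sW c (multW x y)"
    "x \<in> W \<Longrightarrow> y \<in> W \<Longrightarrow> multW x (sW c y) = sW c (multW x y)"
  using algW unfolding yd_algebra_def by blast+
lemma multW_assoc: "x \<in> W \<Longrightarrow> y \<in> W \<Longrightarrow> z \<in> W \<Longrightarrow> multW (multW x y) z = multW x (multW y z)"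
  using algW unfolding yd_algebra_def by blast
lemma multW_one: "x \<in> W \<Longrightarrow> multW oneW x = x" "x \<in> W \<Longrightarrow> multW x oneW = x"
  using algW unfolding yd_algebra_def by blast+
lemma multW_grade: "x \<in> Wg g \<Longrightarrow> y \<in> Wg h \<Longrightarrow> multW x y \<in> Wg (g + h)"
  using algW unfolding yd_algebra_def by blast
lemma oneW_grade: "oneW \<in> Wg 0" using algW unfolding yd_algebra_def by blast
lemma actW_mult: "x \<in> W \<Longrightarrow> y \<in> W \<Longrightarrow> actW h (multW x y) = multW (actW h x) (actW h y)"
  using algW unfolding yd_algebra_def by blast
lemma actW_one: "actW h oneW = oneW" using algW unfolding yd_algebra_def by blast

lemma sW_add2: "x \<in> W \<Longrightarrow> sW (a + b) x = sW a x + sW b x" using module_onD(6)[OF modW] .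
lemma sW_sW: "x \<in> W \<Longrightarrow> sW a (sW b x) = sW (a * b) x" using module_onD(7)[OF modW] .
lemma sW_one: "x \<in> W \<Longrightarrow> sW 1 x = x" using module_onD(8)[OF modW] .
lemma sW_zero: "x \<in> W \<Longrightarrow> sW 0 x = 0" using module_scale0[OF modW] .
lemma sW_in: "x \<in> W \<Longrightarrow> sW c x \<in> W" using module_onD(4)[OF modW] .
lemma sW_add: "x \<in> W \<Longrightarrow> y \<in> W \<Longrightarrow> sW c (x + y) = sW c x + sW c y" using module_onD(5)[OF modW] .
lemma W_add: "x \<in> W \<Longrightarrow> y \<in> W \<Longrightarrow> x + y \<in> W" using module_onD(2)[OF modW] .
lemma W_diff: "x \<in> W \<Longrightarrow> y \<in> W \<Longrightarrow> x - y \<in> W" using module_diff[OF modW] .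
lemma W_zero: "0 \<in> W" using module_onD(1)[OF modW] .

lemma multW_diff: "x \<in> W \<Longrightarrow> y \<in> W \<Longrightarrow> z \<in> W \<Longrightarrow> multW (x - y) z = multW x z - multW y z"
    "x \<in> W \<Longrightarrow> y \<in> W \<Longrightarrow> z \<in> W \<Longrightarrow> multW z (x - y) = multW z x - multW z y"
proof -
  assume a: "x \<in> W" "y \<in> W" "z \<in> W"
  have "multW ((x - y) + y) z = multW (x - y) z + multW y z" using a W_diff multW_add by blast
  then show "multW (x - y) z = multW x z - multW y z" by (simp add: algebra_simps)
  have "multW z ((x - y) + y) = multW z (x - y) + multW z y" using a W_diff multW_add by blast
  then show "multW z (x - y) = multW z x - multW z y" by (simp add: algebra_simps)
qed

lemma sW_diff: "x \<in> W \<Longrightarrow> y \<in> W \<Longrightarrow> sW c (x - y) = sW c x - sW c y"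
proof -
  assume a: "x \<in> W" "y \<in> W"
  have "sW c ((x - y) + y) = sW c (x - y) + sW c y" using a W_diff sW_add by blast
  then show ?thesis by (simp add: algebra_simps)
qed

lemma multW_zero: assumes "y \<in> W" shows "multW y 0 = 0" "multW 0 y = 0"
proof -
  have "multW y (0 + 0) = multW y 0 + multW y 0" using multW_add(2)[OF assms W_zero W_zero] .
  then show "multW y 0 = 0" by simp
  have "multW (0 + 0) y = multW 0 y + multW 0 y" using multW_add(1)[OF W_zero W_zero assms] .
  then show "multW 0 y = 0" by simp
qed

lemma multW_sum_left: "(\<And>i. i \<in> S \<Longrightarrow> F i \<in> W) \<Longrightarrow> y \<in> W \<Longrightarrow> multW (\<Sum>i\<in>S. F i) y = (\<Sum>i\<in>S. multW (F i) y)"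
proof (induct S rule: infinite_finite_induct)
  case (infinite A) then show ?case using multW_zero by simp
next
  case empty then show ?case using multW_zero by simp
next
  case (insert x S)
  have "sum F S \<in> W" using module_sum[OF modW] insert by blast
  then show ?case using insert multW_add by simp
qed

lemma multW_sum_right: "(\<And>i. i \<in> S \<Longrightarrow> F i \<in> W) \<Longrightarrow> y \<in> W \<Longrightarrow> multW y (\<Sum>i\<in>S. F i) = (\<Sum>i\<in>S. multW y (F i))"
proof (induct S rule: infinite_finite_induct)
  case (infinite A) then show ?case using multW_zero by simp
next
  case empty then show ?case using multW_zero by simp
next
  case (insert x S)
  have "sum F S \<in> W" using module_sum[OF modW] insert by blast
  then show ?case using insert multW_add by simp
qed

lemma psi_lin: "lin_on UNIV sL W sW \<psi>"
  using lieW by (simp add: lie_hom_minus_def yd_morphism_def)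
lemma psi_in: "\<psi> x \<in> W" using lin_onD(1)[OF psi_lin] by simp
lemma psi_grade: "x \<in> Lg g \<Longrightarrow> \<psi> x \<in> Wg g"
  using lieW unfolding lie_hom_minus_def yd_morphism_def by blast
lemma psi_equiv: "\<psi> (actL g x) = actW g (\<psi> x)"
  using lieW unfolding lie_hom_minus_def yd_morphism_def by blast
lemma psi_br: "x \<in> Lg g \<Longrightarrow> y \<in> Lg h \<Longrightarrow> \<psi> (br x y) = multW (\<psi> x) (\<psi> y) - sW (\<chi> g h) (multW (\<psi> y) (\<psi> x))"
  using lieW unfolding lie_hom_minus_def by blast
lemma psi_add: "\<psi> (x + y) = \<psi> x + \<psi> y" using lin_onD(2)[OF psi_lin] by simp
lemma psi_scale: "\<psi> (sL c x) = sW c (\<psi> x)" using lin_onD(3)[OF psi_lin] by simp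
lemma psi_zero: "\<psi> 0 = 0" using lin_zero[OF psi_lin modL modW] .

end



context pbw_univ begin

definition wprod :: "'b list \<Rightarrow> 'w" where
  "wprod w = foldr (\<lambda>b acc. multW (\<psi> (eb b)) acc) w oneW"

lemma wprod_Nil[simp]: "wprod [] = oneW" by (simp add: wprod_def)
lemma wprod_Cons[simp]: "wprod (b # w) = multW (\<psi> (eb b)) (wprod w)" by (simp add: wprod_def)

lemma wprod_in: "wprod w \<in> W"
  by (induct w) (simp_all add: oneW multW_in psi_in)

lemma wprod_append: "wprod (u @ v) = multW (wprod u) (wprod v)"
  by (induct u) (simp_all add: multW_one wprod_in multW_assoc psi_in)

lemma wprod_grade: "set w \<subseteq> B \<Longrightarrow> wprod w \<in> Wg (word_deg d w)"
  by (induct w) (simp_all add: oneW_grade multW_grade psi_grade eb_deg)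

definition psit :: "('b list \<Rightarrow> 'k) \<Rightarrow> 'w" where
  "psit f = (\<Sum>w\<in>supp f. sW (f w) (wprod w))"

lemma psit_sup: assumes "finite S" "supp f \<subseteq> S" shows "psit f = (\<Sum>w\<in>S. sW (f w) (wprod w))"
  unfolding psit_def
  by (rule sum.mono_neutral_left) (use assms in \<open>auto simp: supp_def sW_zero wprod_in\<close>)

lemma psit_in: "psit f \<in> W"
  unfolding psit_def by (rule module_sum[OF modW]) (simp add: sW_in wprod_in)

lemma psit_add: assumes "f \<in> FBstar B" "g \<in> FBstar B" shows "psit (f + g) = psit f + psit g"
proof -
  define S where "S = supp f \<union> supp g"
  have fS: "finite S" using assms by (simp add: S_def FBstar_iff)
  have "psit (f + g) = (\<Sum>w\<in>S. sW ((f + g) w) (wprod w))"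
    by (rule psit_sup[OF fS]) (use supp_add S_def in blast)
  also have "\<dots> = (\<Sum>w\<in>S. sW (f w) (wprod w) + sW (g w) (wprod w))"
    by (rule sum.cong) (simp_all add: sW_add2 wprod_in)
  also have "\<dots> = psit f + psit g"
    by (simp add: sum.distrib psit_sup[OF fS] S_def)
  finally show ?thesis .
qed

lemma psit_scale: assumes "f \<in> FBstar B" shows "psit (fscale c f) = sW c (psit f)"
proof -
  have fS: "finite (supp f)" using assms by (simp add: FBstar_iff)
  have "psit (fscale c f) = (\<Sum>w\<in>supp f. sW (fscale c f w) (wprod w))"
    by (rule psit_sup[OF fS]) (use supp_fscale in auto)
  also have "\<dots> = (\<Sum>w\<in>supp f. sW (c * f w) (wprod w))" by simp
  also have "\<dots> = (\<Sum>w\<in>supp f. sW c (sW (f w) (wprod w)))"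
    by (rule sum.cong) (simp_all add: sW_sW wprod_in)
  also have "\<dots> = sW c (psit f)"
    unfolding psit_def by (rule module_scale_sum[OF modW, symmetric]) (simp add: sW_in wprod_in)
  finally show ?thesis .
qed

lemma psit_wdelta: "psit (wdelta w) = wprod w"
  by (simp add: psit_def supp_wdelta wdelta_apply sW_one wprod_in)

lemma psit_lin: "lin_on (FBstar B) fscale W sW psit"
  unfolding lin_on_def by (simp add: psit_in psit_add psit_scale)

lemma psit_zero: "psit 0 = 0" using lin_zero[OF psit_lin module_FBstar modW] .
lemma psit_sum: "(\<And>i. i \<in> S \<Longrightarrow> F i \<in> FBstar B) \<Longrightarrow> psit (\<Sum>i\<in>S. F i) = (\<Sum>i\<in>S. psit (F i))"
  using lin_sum[OF psit_lin module_FBstar modW] .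

lemma psit_phiL: "psit (\<phi>L x) = \<psi> x"
proof (rule span_all[where P="\<lambda>x. psit (\<phi>L x) = \<psi> x"])
  show "psit (\<phi>L 0) = \<psi> 0" by (simp add: phiL_zero psit_zero psi_zero)
  show "psit (\<phi>L (x + y)) = \<psi> (x + y)" if "psit (\<phi>L x) = \<psi> x" "psit (\<phi>L y) = \<psi> y" for x y
    using that by (simp add: phiL_add psit_add phiL_in psi_add)
  show "psit (\<phi>L (sL c x)) = \<psi> (sL c x)" if "psit (\<phi>L x) = \<psi> x" for c x
    using that by (simp add: phiL_scale psit_scale phiL_in psi_scale)
  show "psit (\<phi>L e) = \<psi> e" if "e \<in> E" for e
    using that by (simp add: phiL_E psit_wdelta eb_phi multW_one psi_in)
qed

lemma psit_conc: assumes "f \<in> FBstar B" "g \<in> FBstar B"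
  shows "psit (conc f g) = multW (psit f) (psit g)"
proof -
  have wf: "w \<in> supp f \<Longrightarrow> set w \<subseteq> B" for w using assms by (auto simp: FBstar_iff)
  have wg: "w \<in> supp g \<Longrightarrow> set w \<subseteq> B" for w using assms by (auto simp: FBstar_iff)
  have "conc f g = conc (\<Sum>u\<in>supp f. fscale (f u) (wdelta u)) (\<Sum>v\<in>supp g. fscale (g v) (wdelta v))"
    using expand[OF assms(1)] expand[OF assms(2)] by simp
  also have "\<dots> = (\<Sum>u\<in>supp f. fscale (f u) (\<Sum>v\<in>supp g. fscale (g v) (wdelta (u @ v))))"
    by (subst conc_sum_left) (simp only: conc_scale_left conc_sum_right conc_scale_right conc_wdelta fscale_sum fscale_fscale mult.commute)
  finally have cfg: "conc f g = (\<Sum>u\<in>supp f. fscale (f u) (\<Sum>v\<in>supp g. fscale (g v) (wdelta (u @ v))))" .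
  have inB: "(\<Sum>v\<in>supp g. fscale (g v) (wdelta (u @ v))) \<in> FBstar B" if "u \<in> supp f" for u
    by (rule FBstar_sum, rule FBstar_fscale, rule FBstar_wdelta) (use that wf wg in auto)
  have "psit (conc f g) = (\<Sum>u\<in>supp f. sW (f u) (psit (\<Sum>v\<in>supp g. fscale (g v) (wdelta (u @ v)))))"
    unfolding cfg by (subst psit_sum) (auto intro!: sum.cong simp del: fscale_apply simp: FBstar_fscale inB psit_scale)
  also have "\<dots> = (\<Sum>u\<in>supp f. sW (f u) (\<Sum>v\<in>supp g. sW (g v) (wprod (u @ v))))"
  proof (rule sum.cong[OF refl])
    fix u assume u: "u \<in> supp f"
    have "psit (\<Sum>v\<in>supp g. fscale (g v) (wdelta (u @ v))) = (\<Sum>v\<in>supp g. psit (fscale (g v) (wdelta (u @ v))))"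
      by (rule psit_sum) (rule FBstar_fscale, rule FBstar_wdelta, use u wf wg in auto)
    also have "\<dots> = (\<Sum>v\<in>supp g. sW (g v) (wprod (u @ v)))"
      by (rule sum.cong[OF refl]) (subst psit_scale, rule FBstar_wdelta, use u wf wg in \<open>auto simp: psit_wdelta\<close>)
    finally show "sW (f u) (psit (\<Sum>v\<in>supp g. fscale (g v) (wdelta (u @ v)))) = sW (f u) (\<Sum>v\<in>supp g. sW (g v) (wprod (u @ v)))"
      by simp
  qed
  also have "\<dots> = (\<Sum>u\<in>supp f. multW (sW (f u) (wprod u)) (psit g))"
  proof (rule sum.cong[OF refl])
    fix u
    have "multW (sW (f u) (wprod u)) (psit g) = sW (f u) (multW (wprod u) (psit g))"
      by (rule multW_sc(1)[OF wprod_in psit_in])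
    also have "multW (wprod u) (psit g) = (\<Sum>v\<in>supp g. multW (wprod u) (sW (g v) (wprod v)))"
      unfolding psit_def by (rule multW_sum_right) (simp_all add: sW_in wprod_in)
    also have "\<dots> = (\<Sum>v\<in>supp g. sW (g v) (wprod (u @ v)))"
      by (rule sum.cong[OF refl]) (simp add: multW_sc wprod_in wprod_append)
    finally show "sW (f u) (\<Sum>v\<in>supp g. sW (g v) (wprod (u @ v))) = multW (sW (f u) (wprod u)) (psit g)"
      by simp
  qed
  also have "\<dots> = multW (psit f) (psit g)"
    unfolding psit_def[of f] by (rule multW_sum_left[symmetric]) (simp_all add: sW_in wprod_in psit_in)
  finally show ?thesis .
qed

end



context pbw_univ begin

lemma psit_lam_gen: assumes "f \<in> FBstar B" "\<And>w. w \<in> supp f \<Longrightarrow> psit (lam (wdelta w)) = wprod w"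
  shows "psit (lam f) = psit f"
proof -
  have ws: "w \<in> supp f \<Longrightarrow> set w \<subseteq> B" for w using assms by (auto simp: FBstar_iff)
  have "psit (lam f) = (\<Sum>w\<in>supp f. psit (fscale (f w) (lam (wdelta w))))"
    unfolding lam_expand[OF assms(1)]
    by (rule psit_sum) (rule FBstar_fscale, rule subsetD[OF FP_sub], rule lam_in, rule FBstar_wdelta, rule ws)
  also have "\<dots> = (\<Sum>w\<in>supp f. sW (f w) (wprod w))"
    by (rule sum.cong[OF refl]) (subst psit_scale, rule subsetD[OF FP_sub], rule lam_in, rule FBstar_wdelta,
        rule ws, simp_all add: assms(2))
  finally show ?thesis by (simp add: psit_def)
qed

lemma algebra_step:
  assumes W: "p \<in> W" "q \<in> W" "x \<in> W" "y \<in> W"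
  shows "sW k (multW p (multW y (multW x q))) + multW (multW p (multW x y - sW k (multW y x))) q
       = multW p (multW x (multW y q))"
proof -
  have i: "multW x y \<in> W" "multW y x \<in> W" "multW y q \<in> W" "multW x q \<in> W" using W multW_in by auto
  have "multW p (multW x y - sW k (multW y x)) = multW p (multW x y) - sW k (multW p (multW y x))"
    using multW_diff(2)[OF i(1) sW_in[OF i(2)] W(1)] multW_sc(2)[OF W(1) i(2)] by simp
  then have "multW (multW p (multW x y - sW k (multW y x))) q
      = multW (multW p (multW x y)) q - sW k (multW (multW p (multW y x)) q)"
    using multW_diff(1)[OF multW_in[OF W(1) i(1)] sW_in[OF multW_in[OF W(1) i(2)]] W(2)]
          multW_sc(1)[OF multW_in[OF W(1) i(2)] W(2)] by simp
  also have "multW (multW p (multW x y)) q = multW p (multW x (multW y q))"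
    using W i by (simp add: multW_assoc multW_in)
  also have "multW (multW p (multW y x)) q = multW p (multW y (multW x q))"
    using W i by (simp add: multW_assoc multW_in)
  finally show ?thesis by simp
qed

lemma psit_lam_word: assumes "set w \<subseteq> B" shows "psit (lam (wdelta w)) = wprod w"
  using order _ _ assms
proof (rule reduce_induct[where Q="\<lambda>w. psit (lam (wdelta w)) = wprod w"])
  fix w assume "w \<in> Pwords B prec"
  then show "psit (lam (wdelta w)) = wprod w" using lam_i psit_wdelta by metis
next
  fix u b c v
  assume B: "set u \<subseteq> B" "set v \<subseteq> B" "b \<in> B" "c \<in> B"
    and Q1: "psit (lam (wdelta (u @ c # b # v))) = wprod (u @ c # b # v)"
    and Q2: "\<And>w'. set w' \<subseteq> B \<Longrightarrow> length w' < Suc (Suc (length u + length v)) \<Longrightarrow>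
              psit (lam (wdelta w')) = wprod w'"
  define F where "F = \<phi>L (br (eb b) (eb c))"
  define k where "k = \<chi> (d b) (d c)"
  have sF: "single (d b + d c) F" unfolding F_def
    by (rule phiL_single[OF br_grade[OF eb_deg[OF B(3)] eb_deg[OF B(4)]]])
  have FB: "F \<in> FBstar B" using sF single_def by blast
  have uB: "wdelta u \<in> FBstar B" "wdelta v \<in> FBstar B" using B by (simp_all add: FBstar_wdelta)
  define G where "G = conc (conc (wdelta u) F) (wdelta v)"
  have GB: "G \<in> FBstar B" unfolding G_def by (intro FBstar_conc uB FB)
  have suppG: "supp G \<subseteq> (\<lambda>w. u @ w @ v) ` supp F"
  proof -
    have "supp G \<subseteq> (\<Union>w\<in>supp F. supp (fscale (F w) (wdelta (u @ w @ v))))"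
      unfolding G_def conc_mid[OF FB] by (rule supp_sum)
    also have "\<dots> \<subseteq> (\<lambda>w. u @ w @ v) ` supp F"
      using supp_fscale supp_wdelta by fastforce
    finally show ?thesis .
  qed
  have lamG: "psit (lam G) = psit G"
  proof (rule psit_lam_gen[OF GB])
    fix w assume "w \<in> supp G"
    then obtain w0 where w0: "w0 \<in> supp F" "w = u @ w0 @ v" using suppG by blast
    then have "length w0 = 1" "set w0 \<subseteq> B" using sF FB by (auto simp: single_def FBstar_iff)
    then show "psit (lam (wdelta w)) = wprod w" using w0 B by (intro Q2) auto
  qed
  have psG: "psit G = multW (multW (wprod u) (psit F)) (wprod v)"
    unfolding G_def by (simp add: psit_conc FBstar_conc uB FB psit_wdelta)
  have psF: "psit F = multW (\<psi> (eb b)) (\<psi> (eb c)) - sW k (multW (\<psi> (eb c)) (\<psi> (eb b)))"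
    unfolding F_def k_def psit_phiL by (rule psi_br[OF eb_deg[OF B(3)] eb_deg[OF B(4)]])
  have l1: "lam (wdelta (u @ c # b # v)) \<in> FBstar B" "lam G \<in> FBstar B"
    using subsetD[OF FP_sub lam_in[OF FBstar_wdelta[of "u @ c # b # v" B]]] subsetD[OF FP_sub lam_in[OF GB]] B
    by auto
  have "psit (lam (wdelta (u @ b # c # v))) = psit (fscale k (lam (wdelta (u @ c # b # v))) + lam G)"
    unfolding lam_ii'[OF B] k_def G_def F_def ..
  also have "\<dots> = sW k (psit (lam (wdelta (u @ c # b # v)))) + psit (lam G)"
    by (simp del: fscale_apply add: psit_add psit_scale FBstar_fscale l1)
  also have "\<dots> = sW k (multW (wprod u) (multW (\<psi> (eb c)) (multW (\<psi> (eb b)) (wprod v))))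
       + multW (multW (wprod u) (multW (\<psi> (eb b)) (\<psi> (eb c)) - sW k (multW (\<psi> (eb c)) (\<psi> (eb b))))) (wprod v)"
    unfolding Q1 lamG psG psF by (simp add: wprod_append)
  also have "\<dots> = multW (wprod u) (multW (\<psi> (eb b)) (multW (\<psi> (eb c)) (wprod v)))"
    by (rule algebra_step) (simp_all add: wprod_in psi_in)
  also have "\<dots> = wprod (u @ b # c # v)" by (simp add: wprod_append)
  finally show "psit (lam (wdelta (u @ b # c # v))) = wprod (u @ b # c # v)" .
qed

lemma psit_lam: assumes "f \<in> FBstar B" shows "psit (lam f) = psit f"
  by (rule psit_lam_gen[OF assms]) (use assms psit_lam_word in \<open>auto simp: FBstar_iff\<close>)

end



context pbw_univ begin

lemma Wg_sum: "(\<And>i. i \<in> S \<Longrightarrow> F i \<in> Wg g) \<Longrightarrow> (\<Sum>i\<in>S. F i) \<in> Wg g"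
proof (induct S rule: infinite_finite_induct)
  case (infinite A) then show ?case using Wg_closed by simp
next
  case empty then show ?case using Wg_closed by simp
next
  case (insert x S) then show ?case using Wg_closed by simp
qed

lemma actW_wprod: "set w \<subseteq> B \<Longrightarrow> actW h (wprod w) = sW (\<chi> h (word_deg d w)) (wprod w)"
proof (induct w)
  case Nil then show ?case by (simp add: actW_one chi_add sW_one oneW)
next
  case (Cons b w)
  have b: "b \<in> B" and w: "set w \<subseteq> B" using Cons by auto
  have "actW h (\<psi> (eb b)) = sW (\<chi> h (d b)) (\<psi> (eb b))"
    using psi_equiv[of h "eb b"] actL_E[OF eb_deg[OF b]] psi_scale by simp
  then have "actW h (wprod (b # w)) = multW (sW (\<chi> h (d b)) (\<psi> (eb b))) (sW (\<chi> h (word_deg d w)) (wprod w))"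
    using Cons w by (simp add: actW_mult psi_in wprod_in)
  also have "\<dots> = sW (\<chi> h (word_deg d (b # w))) (wprod (b # w))"
    by (simp add: multW_sc psi_in wprod_in sW_in sW_sW multW_in chi_add mult.commute)
  finally show ?case .
qed

lemma hom_psit: "yd_algebra_hom U fscale Ug actU multU (wdelta []) W sW Wg actW multW oneW psit"
  unfolding yd_algebra_hom_def yd_morphism_def
proof (intro conjI allI ballI)
  show "lin_on U fscale W sW psit"
    unfolding lin_on_def by (simp add: psit_in psit_add psit_scale U_FB)
  show "psit x \<in> Wg g" if x: "x \<in> Ug g" for g x
  proof -
    have xx: "x \<in> FBstar B" "homogw g x" using x Ug_iff U_FB by blast+
    show ?thesis unfolding psit_def
    proof (rule Wg_sum, rule Wg_closed(3))
      fix w assume w: "w \<in> supp x"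
      then have "set w \<subseteq> B" "word_deg d w = g" using xx by (auto simp: FBstar_iff homogw_def)
      then show "wprod w \<in> Wg g" using wprod_grade by metis
    qed
  qed
  show "psit (actU g x) = actW g (psit x)" if x: "x \<in> U" for g x
  proof -
    have xB: "x \<in> FBstar B" using x U_FB by blast
    have ws: "w \<in> supp x \<Longrightarrow> set w \<subseteq> B" for w using xB by (auto simp: FBstar_iff)
    have "psit (actU g x) = (\<Sum>w\<in>supp x. sW (\<chi> g (word_deg d w) * x w) (wprod w))"
      by (simp add: actU_cs[OF xB] psit_def supp_cs cs_apply)
    also have "\<dots> = (\<Sum>w\<in>supp x. actW g (sW (x w) (wprod w)))"
    proof (rule sum.cong[OF refl])
      fix w assume w: "w \<in> supp x"
      have "actW g (sW (x w) (wprod w)) = sW (x w) (actW g (wprod w))"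
        using lin_onD(3)[OF actW_lin wprod_in] .
      also have "\<dots> = sW (\<chi> g (word_deg d w) * x w) (wprod w)"
        by (simp add: actW_wprod[OF ws[OF w]] sW_sW wprod_in mult.commute)
      finally show "sW (\<chi> g (word_deg d w) * x w) (wprod w) = actW g (sW (x w) (wprod w))" by simp
    qed
    also have "\<dots> = actW g (psit x)"
      unfolding psit_def by (rule lin_sum[OF actW_lin modW modW, symmetric]) (simp add: sW_in wprod_in)
    finally show ?thesis .
  qed
  show "psit (multU x y) = multW (psit x) (psit y)" if "x \<in> U" "y \<in> U" for x y
    using that by (simp add: psit_lam FBstar_conc U_FB psit_conc)
  show "psit (wdelta []) = oneW" by (simp add: psit_wdelta)
qed

lemma hom_unique:
  assumes h: "yd_algebra_hom U fscale Ug actU multU (wdelta []) W sW Wg actW multW oneW \<psi>'"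
    and c: "\<forall>x. \<psi>' (\<phi>L x) = \<psi> x"
    and u: "u \<in> U"
  shows "\<psi>' u = psit u"
proof -
  have lin: "lin_on U fscale W sW \<psi>'" using h by (simp add: yd_algebra_hom_def yd_morphism_def)
  have mult: "\<And>x y. x \<in> U \<Longrightarrow> y \<in> U \<Longrightarrow> \<psi>' (multU x y) = multW (\<psi>' x) (\<psi>' y)"
    using h by (simp add: yd_algebra_hom_def)
  have one: "\<psi>' (wdelta []) = oneW" using h by (simp add: yd_algebra_hom_def)
  have pw: "\<psi>' (wdelta w) = wprod w" if "w \<in> Pwords B prec" for w
    using that
  proof (induct w)
    case Nil then show ?case using one by simp
  next
    case (Cons b w)
    have wP: "w \<in> Pwords B prec" using Cons(2) by (rule Pwords_tl)
    have b: "b \<in> B" using Cons(2) by (simp add: Pwords_def)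
    have bP: "[b] \<in> Pwords B prec" using b by (simp add: Pwords_def)
    have "wdelta (b # w) = multU (wdelta [b]) (wdelta w)"
      using lam_i Cons(2) by (simp add: conc_wdelta)
    then have "\<psi>' (wdelta (b # w)) = multW (\<psi>' (wdelta [b])) (\<psi>' (wdelta w))"
      using mult FP_wdelta[OF bP] FP_wdelta[OF wP] by simp
    also have "\<psi>' (wdelta [b]) = \<psi> (eb b)" using c phiL_eb[OF b] by metis
    finally show ?case using Cons(1)[OF wP] by simp
  qed
  have uB: "u \<in> FBstar B" using u U_FB by blast
  have wP: "w \<in> supp u \<Longrightarrow> w \<in> Pwords B prec" for w using u by (auto simp: FP_iff)
  have "\<psi>' u = \<psi>' (\<Sum>w\<in>supp u. fscale (u w) (wdelta w))" using expand[OF uB] by simp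
  also have "\<dots> = (\<Sum>w\<in>supp u. \<psi>' (fscale (u w) (wdelta w)))"
    by (rule lin_sum[OF lin module_FP modW]) (simp add: FP_fscale FP_wdelta wP)
  also have "\<dots> = (\<Sum>w\<in>supp u. sW (u w) (wprod w))"
    by (rule sum.cong[OF refl]) (simp add: lin_onD(3)[OF lin] FP_wdelta wP pw)
  finally show ?thesis by (simp add: psit_def)
qed

end



theorem theorem3p5:
  fixes \<chi> :: "'g::group_add \<Rightarrow> 'g \<Rightarrow> 'k::field"
    and sL :: "'k \<Rightarrow> 'l::ab_group_add \<Rightarrow> 'l" and Lg :: "'g \<Rightarrow> 'l set"
    and actL :: "'g \<Rightarrow> 'l \<Rightarrow> 'l" and br :: "'l \<Rightarrow> 'l \<Rightarrow> 'l"
    and A :: "'a::ab_group_add set" and sA :: "'k \<Rightarrow> 'a \<Rightarrow> 'a" and Ag :: "'g \<Rightarrow> 'a set"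
    and actA :: "'g \<Rightarrow> 'a \<Rightarrow> 'a" and multA :: "'a \<Rightarrow> 'a \<Rightarrow> 'a" and oneA :: 'a
    and \<phi>A :: "'l \<Rightarrow> 'a"
    and E :: "'l set" and B :: "'b set" and \<phi> :: "'l \<Rightarrow> 'b"
    and \<phi>L :: "'l \<Rightarrow> ('b list \<Rightarrow> 'k)"
    and prec :: "'b \<Rightarrow> 'b \<Rightarrow> bool"
    and lam :: "('b list \<Rightarrow> 'k) \<Rightarrow> ('b list \<Rightarrow> 'k)"
  defines "d \<equiv> letter_deg Lg E \<phi>"
    and "U \<equiv> FP B prec"
    and "Ug \<equiv> (\<lambda>g. FBstar_gr B (letter_deg Lg E \<phi>) g \<inter> FP B prec)"
    and "actU \<equiv> act_FBstar (\<lambda>g b. \<phi>L (actL g (inv_into E \<phi> b)))"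
    and "multU \<equiv> (\<lambda>u v. lam (conc u v))"
  assumes bichar: "bicharacter \<chi>"
    and mlie: "braided_mlie_witness \<chi> UNIV sL Lg actL br A sA Ag actA multA oneA \<phi>A"
    and braid: "braiding_by \<chi> UNIV sL Lg actL"
    and basis: "basis_on UNIV sL E"
    and homog: "\<forall>e\<in>E. \<exists>g. e \<in> Lg g"
    and bij: "bij_betw \<phi> E B"
    and phiL_lin: "lin_on UNIV sL (FBstar B) fscale \<phi>L"
    and phiL_E: "\<forall>e\<in>E. \<phi>L e = wdelta [\<phi> e]"
    and order: "strict_total_order_on B prec"
    and lam_lin: "lin_on (FBstar B) fscale (FP B prec) fscale lam"
    and lam_i: "\<forall>w\<in>Pwords B prec. lam (wdelta w) = wdelta w"
    and lam_ii: "\<forall>u v. set u \<subseteq> B \<longrightarrow> set v \<subseteq> B \<longrightarrow> (\<forall>b\<in>B. \<forall>c\<in>B.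
        lam (wdelta (u @ b # c # v)) =
          fscale (\<chi> (d b) (d c)) (lam (wdelta (u @ c # b # v)))
          + lam (conc (conc (wdelta u) (\<phi>L (br (inv_into E \<phi> b) (inv_into E \<phi> c)))) (wdelta v)))"
    and lam_iii: "\<forall>u\<in>FBstar B. \<forall>v\<in>FBstar B.
        lam (conc u v) = lam (conc (lam u) v) \<and> lam (conc u v) = lam (conc u (lam v))"
  shows "yd_algebra U fscale Ug actU multU (wdelta [])
    \<and> lie_hom_minus \<chi> UNIV sL Lg actL br U fscale Ug actU multU \<phi>L
    \<and> (\<forall>(W :: 'w::ab_group_add set) sW Wg actW multW oneW \<psi>.
         yd_algebra W sW Wg actW multW oneW
         \<and> lie_hom_minus \<chi> UNIV sL Lg actL br W sW Wg actW multW \<psi> \<longrightarrow>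
         (\<exists>\<psi>b. yd_algebra_hom U fscale Ug actU multU (wdelta []) W sW Wg actW multW oneW \<psi>b
               \<and> (\<forall>x. \<psi>b (\<phi>L x) = \<psi> x)
               \<and> (\<forall>\<psi>'. yd_algebra_hom U fscale Ug actU multU (wdelta []) W sW Wg actW multW oneW \<psi>'
                        \<and> (\<forall>x. \<psi>' (\<phi>L x) = \<psi> x) \<longrightarrow> (\<forall>u\<in>U. \<psi>' u = \<psi>b u))))"
proof -
  have pbw: "pbw \<chi> sL Lg actL br A sA Ag actA multA oneA \<phi>A E B \<phi> \<phi>L prec lam"
    unfolding pbw_def using bichar mlie braid basis homog bij phiL_lin phiL_E order lam_lin lam_i lam_ii lam_iii
    unfolding assms(1) by blast
  interpret pbw \<chi> sL Lg actL br A sA Ag actA multA oneA \<phi>A E B \<phi> \<phi>L prec lam by (rule pbw)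
  show ?thesis unfolding assms(2-5)
  proof (intro conjI allI impI)
    show "yd_algebra (FP B prec) fscale (\<lambda>g. FBstar_gr B (letter_deg Lg E \<phi>) g \<inter> FP B prec)
       (act_FBstar (\<lambda>g b. \<phi>L (actL g (inv_into E \<phi> b)))) (\<lambda>u v. lam (conc u v)) (wdelta [])"
      by (rule alg_U)
    show "lie_hom_minus \<chi> UNIV sL Lg actL br (FP B prec) fscale (\<lambda>g. FBstar_gr B (letter_deg Lg E \<phi>) g \<inter> FP B prec)
       (act_FBstar (\<lambda>g b. \<phi>L (actL g (inv_into E \<phi> b)))) (\<lambda>u v. lam (conc u v)) \<phi>L"
      by (rule lie_U)
    fix W :: "'w::ab_group_add set" and sW Wg actW multW oneW \<psi>
    assume a: "yd_algebra W sW Wg actW multW oneW \<and> lie_hom_minus \<chi> UNIV sL Lg actL br W sW Wg actW multW \<psi>"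
    interpret pbw_univ \<chi> sL Lg actL br A sA Ag actA multA oneA \<phi>A E B \<phi> \<phi>L prec lam W sW Wg actW multW oneW \<psi>
      using a by unfold_locales blast+
    show "\<exists>\<psi>b. yd_algebra_hom (FP B prec) fscale (\<lambda>g. FBstar_gr B (letter_deg Lg E \<phi>) g \<inter> FP B prec)
             (act_FBstar (\<lambda>g b. \<phi>L (actL g (inv_into E \<phi> b)))) (\<lambda>u v. lam (conc u v)) (wdelta []) W sW Wg actW
             multW oneW \<psi>b \<and>
            (\<forall>x. \<psi>b (\<phi>L x) = \<psi> x) \<and>
            (\<forall>\<psi>'. yd_algebra_hom (FP B prec) fscale (\<lambda>g. FBstar_gr B (letter_deg Lg E \<phi>) g \<inter> FP B prec)
                   (act_FBstar (\<lambda>g b. \<phi>L (actL g (inv_into E \<phi> b)))) (\<lambda>u v. lam (conc u v)) (wdelta []) W sW Wg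
                   actW multW oneW \<psi>' \<and>
                  (\<forall>x. \<psi>' (\<phi>L x) = \<psi> x) \<longrightarrow>
                  (\<forall>u\<in>FP B prec. \<psi>' u = \<psi>b u))"
    proof (intro exI[of _ psit] conjI allI impI ballI)
      show "yd_algebra_hom (FP B prec) fscale (\<lambda>g. FBstar_gr B (letter_deg Lg E \<phi>) g \<inter> FP B prec)
             (act_FBstar (\<lambda>g b. \<phi>L (actL g (inv_into E \<phi> b)))) (\<lambda>u v. lam (conc u v)) (wdelta []) W sW Wg actW
             multW oneW psit" by (rule hom_psit)
      show "psit (\<phi>L x) = \<psi> x" for x by (rule psit_phiL)
      fix \<psi>' and u :: "'b list \<Rightarrow> 'k"
      assume h: "yd_algebra_hom (FP B prec) fscale (\<lambda>g. FBstar_gr B (letter_deg Lg E \<phi>) g \<inter> FP B prec)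
                   (act_FBstar (\<lambda>g b. \<phi>L (actL g (inv_into E \<phi> b)))) (\<lambda>u v. lam (conc u v)) (wdelta []) W sW Wg
                   actW multW oneW \<psi>' \<and> (\<forall>x. \<psi>' (\<phi>L x) = \<psi> x)"
        and u: "u \<in> FP B prec"
      show "\<psi>' u = psit u" using hom_unique h u by blast
    qed
  qed
qed



end
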